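(* For every real number $\kappa$ there exists a three-dimensional, regular, bipartite lattice $L$ (in the sense defined in the context) containing no cycle of length $6$ (i.e. $C_6(L)=0$) and containing at least one cycle of length $4$, such that $$\frac{\bar\theta_{2,2,2}(L)}{\bar C_4(L)} > \kappa .$$ Moreover, $L$ can be realized as follows: its vertices are points of $\mathbb{R}^3$ and its edges are straight line segments joining them, two edges meeting at most in a common endpoint; $L$ is invariant under translation by an integer in each of the three coordinate directions; every vertex lies in the interior of one of the unit cubes with integer-coordinate vertices tessellating $\mathbb{R}^3$, each such cube containing finitely many vertices; and every edge either lies in the interior of one such cube or joins vertices lying in two nearest-neighbour cubes.
   Context: A connected infinite graph $G$ is called a lattice if there is a finitely generated abelian group $\Gamma$ of automorphisms of $G$ (called translations) such that the set of orbits of vertices under $\Gamma$ is finite; it is $i$-dimensional if exactly $i$ elements of a generating set of $\Gamma$ have infinite order (here $\Gamma\cong\mathbb{Z}^3$ acting by integer translations). The lattice is regular if all vertices have the same degree $d$, and bipartite if its graph is bipartite. Let $G_1$ be the $4$-cycle and let $G_2$ be the theta graph $\theta_{2,2,2}$: two vertices $u,w$ joined by three internally disjoint paths of length $2$ (5 vertices, 6 edges). For a graph $H$, $C_k(H)$ denotes the number of subgraphs of $H$ isomorphic to the cycle of length $k$, and $\theta_{2,2,2}(H)$ the number of subgraphs isomorphic to $G_2$. For a lattice these counts are infinite, so one uses per-vertex densities: choosing a finite set $R$ of representatives of the vertex orbits, $\bar C_4(L)$ is the average over $v\in R$ of $\tfrac14$ times the number of $4$-cycles of $L$ containing $v$,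 and $\bar\theta_{2,2,2}(L)$ is the average over $v\in R$ of $\tfrac15$ times the number of copies of $G_2$ in $L$ containing $v$; equivalently, the ratio $\bar\theta_{2,2,2}/\bar C_4$ is the limit of $\theta_{2,2,2}(H_n)/C_4(H_n)$ along any sequence of finite graphs $H_n$ converging to $L$ in the Benjamini–Schramm sense. *)

theory Defs
  imports "HOL-Analysis.Analysis"
begin

definition simple_graph :: "'a set \<Rightarrow> ('a \<Rightarrow> 'a \<Rightarrow> bool) \<Rightarrow> bool" where
  "simple_graph V E \<longleftrightarrow> (\<forall>x y. E x y \<longrightarrow> x \<in> V \<and> y \<in> V \<and> x \<noteq> y \<and> E y x)"

definition connected_graph :: "'a set \<Rightarrow> ('a \<Rightarrow> 'a \<Rightarrow> bool) \<Rightarrow> bool" where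
  "connected_graph V E \<longleftrightarrow> (\<forall>x\<in>V. \<forall>y\<in>V. E\<^sup>*\<^sup>* x y)"

definition regular_graph :: "'a set \<Rightarrow> ('a \<Rightarrow> 'a \<Rightarrow> bool) \<Rightarrow> bool" where
  "regular_graph V E \<longleftrightarrow>
     (\<exists>d::nat. \<forall>v\<in>V. finite {w. E v w} \<and> card {w. E v w} = d)"

definition bipartite_graph :: "'a set \<Rightarrow> ('a \<Rightarrow> 'a \<Rightarrow> bool) \<Rightarrow> bool" where
  "bipartite_graph V E \<longleftrightarrow> (\<exists>A. \<forall>x y. E x y \<longrightarrow> (x \<in> A \<longleftrightarrow> y \<notin> A))"

definition cycle_subgraphs :: "('a \<Rightarrow> 'a \<Rightarrow> bool) \<Rightarrow> nat \<Rightarrow> 'a set set set" where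
  "cycle_subgraphs E k =
     {{{x i, x ((i + 1) mod k)} | i. i < k} | x.
        inj_on x {..<k} \<and> (\<forall>i<k. E (x i) (x ((i + 1) mod k)))}"

text \<open>Subgraphs isomorphic to theta_{2,2,2}: vertices u, w joined by three
internally disjoint paths u-a-w, u-b-w, u-c-w; identified with their edge sets.\<close>
definition theta222_subgraphs :: "('a \<Rightarrow> 'a \<Rightarrow> bool) \<Rightarrow> 'a set set set" where
  "theta222_subgraphs E =
     {{{u, a}, {a, w}, {u, b}, {b, w}, {u, c}, {c, w}} | u w a b c.
        distinct [u, w, a, b, c] \<and>
        E u a \<and> E a w \<and> E u b \<and> E b w \<and> E u c \<and> E c w}"

definition copies_at :: "'a set set set \<Rightarrow> 'a \<Rightarrow> nat" where
  "copies_at S v = card {H \<in> S. v \<in> \<Union>H}"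

definition cube_of :: "real^3 \<Rightarrow> int^3" where
  "cube_of x = (\<chi> i. \<lfloor>x $ i\<rfloor>)"

definition integer_vector :: "real^3 \<Rightarrow> bool" where
  "integer_vector t \<longleftrightarrow> (\<forall>i. t $ i \<in> \<int>)"

text \<open>Set of representatives of the vertex orbits under integer translations:
the vertices lying in the cube [0,1)^3.\<close>
definition reps :: "(real^3) set \<Rightarrow> (real^3) set" where
  "reps V = {v \<in> V. cube_of v = 0}"

definition C4_bar :: "(real^3) set \<Rightarrow> (real^3 \<Rightarrow> real^3 \<Rightarrow> bool) \<Rightarrow> real" where
  "C4_bar V E = (\<Sum>v\<in>reps V. real (copies_at (cycle_subgraphs E 4) v) / 4) / real (card (reps V))"

definition theta222_bar :: "(real^3) set \<Rightarrow> (real^3 \<Rightarrow> real^3 \<Rightarrow> bool) \<Rightarrow> real" where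
  "theta222_bar V E = (\<Sum>v\<in>reps V. real (copies_at (theta222_subgraphs E) v) / 5) / real (card (reps V))"

definition cubic_lattice :: "(real^3) set \<Rightarrow> (real^3 \<Rightarrow> real^3 \<Rightarrow> bool) \<Rightarrow> bool" where
  "cubic_lattice V E \<longleftrightarrow>
     simple_graph V E \<and> connected_graph V E \<and> infinite V \<and>
     (\<forall>a b c d. E a b \<and> E c d \<and> {a, b} \<noteq> {c, d} \<longrightarrow>
        closed_segment a b \<inter> closed_segment c d \<subseteq> {a, b} \<inter> {c, d}) \<and>
     (\<forall>t. integer_vector t \<longrightarrow>
        (\<forall>x. x \<in> V \<longleftrightarrow> x + t \<in> V) \<and> (\<forall>x y. E x y \<longleftrightarrow> E (x + t) (y + t))) \<and>
     (\<forall>v\<in>V. \<forall>i. v $ i \<notin> \<int>) \<and>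
     (\<forall>z::int^3. finite {v \<in> V. cube_of v = z}) \<and>
     (\<forall>x y. E x y \<longrightarrow> cube_of x = cube_of y \<or>
        (\<exists>i. \<bar>cube_of x $ i - cube_of y $ i\<bar> = 1 \<and>
             (\<forall>j. j \<noteq> i \<longrightarrow> cube_of x $ j = cube_of y $ j)))"

end

theory Submission
  imports Defs "HOL-Library.Countable"
begin

definition mk3 :: "real \<Rightarrow> real \<Rightarrow> real \<Rightarrow> real^3" where
  "mk3 a b c = (\<chi> i. if i = 1 then a else if i = 2 then b else c)"
lemma mk3_nth[simp]: "mk3 a b c $ 1 = a" "mk3 a b c $ 2 = b" "mk3 a b c $ 3 = c"
  by (simp_all add: mk3_def)
lemma vec3_eq: "(x::real^3) = y \<longleftrightarrow> x$1 = y$1 \<and> x$2 = y$2 \<and> x$3 = y$3"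
  by (simp add: vec_eq_iff forall_3)
lemma int_small: "(x::real) \<in> \<int> \<Longrightarrow> \<bar>x\<bar> < 1 \<Longrightarrow> x = 0"
  by (auto elim!: Ints_cases)

definition PX :: "real \<Rightarrow> real^3" where "PX s = mk3 (1/2 + s) (1/2 - s) (1/2)"
definition PY :: "real \<Rightarrow> real^3" where "PY t = mk3 (1/3) (1/3 + t) (1/3 - t)"
definition dir :: "nat \<Rightarrow> real^3" where
  "dir k = mk3 (if k = 0 then 1 else 0) (if k = 1 then 1 else 0) (if k = 2 then 1 else 0)"
definition tau :: "nat \<Rightarrow> real" where "tau k = (3 + real k) / 16"

lemma seg_coords:
  assumes "P \<in> closed_segment (z + PX s) (z + k + PY t)"
  obtains l where "0 \<le> l" "l \<le> 1"
    "P$1 = z$1 + (1-l)*(1/2+s) + l*(k$1 + 1/3)"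
    "P$2 = z$2 + (1-l)*(1/2-s) + l*(k$2 + 1/3 + t)"
    "P$3 = z$3 + (1-l)*(1/2) + l*(k$3 + 1/3 - t)"
    "P = (1-l) *\<^sub>R (z + PX s) + l *\<^sub>R (z + k + PY t)"
proof -
  from assms obtain l where l: "0 \<le> l" "l \<le> 1" "P = (1-l) *\<^sub>R (z + PX s) + l *\<^sub>R (z + k + PY t)"
    unfolding closed_segment_def by auto
  show ?thesis
    apply (rule that[OF l(1,2) _ _ _ l(3)])
    by (simp_all add: l(3) PX_def PY_def algebra_simps, simp_all add: field_simps)
qed

lemma small_mult: "0 \<le> (l::real) \<Longrightarrow> l \<le> 1 \<Longrightarrow> \<bar>x\<bar> < c \<Longrightarrow> \<bar>l * x\<bar> < c"
proof -
  assume a: "0 \<le> l" "l \<le> 1" "\<bar>x\<bar> < c"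
  have "\<bar>l * x\<bar> = l * \<bar>x\<bar>" using a by (simp add: abs_mult abs_of_nonneg)
  also have "\<dots> \<le> \<bar>x\<bar>" using a by (simp add: mult_left_le_one_le)
  finally show ?thesis using a by linarith
qed

lemma abs_diff_small: "0 < a \<Longrightarrow> a \<le> c \<Longrightarrow> 0 < b \<Longrightarrow> b \<le> c \<Longrightarrow> c < e \<Longrightarrow> \<bar>a - b\<bar> < (e::real)"
  by arith

lemma int01: "(x::real) \<in> \<int> \<Longrightarrow> 0 \<le> x \<Longrightarrow> x \<le> 1 \<Longrightarrow> x = 0 \<or> x = 1"
  by (auto elim!: Ints_cases)

lemma seg_inter:
  assumes zi: "integer_vector z1" "integer_vector z2"
    and s: "0 < s1" "s1 \<le> 1/4" "0 < s2" "s2 \<le> 1/4"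
    and t: "0 < t1" "t1 \<le> 5/16" "0 < t2" "t2 \<le> 5/16"
    and k1: "k1 = 0 \<or> (\<exists>i<3. k1 = dir i \<and> t1 = tau i)"
    and k2: "k2 = 0 \<or> (\<exists>i<3. k2 = dir i \<and> t2 = tau i)"
    and P1: "P \<in> closed_segment (z1 + PX s1) (z1 + k1 + PY t1)"
    and P2: "P \<in> closed_segment (z2 + PX s2) (z2 + k2 + PY t2)"
  shows "(P = z1 + PX s1 \<and> P = z2 + PX s2) \<or> (P = z1 + k1 + PY t1 \<and> P = z2 + k2 + PY t2)
      \<or> (z1 + PX s1 = z2 + PX s2 \<and> z1 + k1 + PY t1 = z2 + k2 + PY t2)"
proof -
  obtain l where l: "0 \<le> l" "l \<le> 1"
    "P$1 = z1$1 + (1-l)*(1/2+s1) + l*(k1$1 + 1/3)"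
    "P$2 = z1$2 + (1-l)*(1/2-s1) + l*(k1$2 + 1/3 + t1)"
    "P$3 = z1$3 + (1-l)*(1/2) + l*(k1$3 + 1/3 - t1)"
    "P = (1-l) *\<^sub>R (z1 + PX s1) + l *\<^sub>R (z1 + k1 + PY t1)"
    using seg_coords[OF P1] by blast
  obtain m where m: "0 \<le> m" "m \<le> 1"
    "P$1 = z2$1 + (1-m)*(1/2+s2) + m*(k2$1 + 1/3)"
    "P$2 = z2$2 + (1-m)*(1/2-s2) + m*(k2$2 + 1/3 + t2)"
    "P$3 = z2$3 + (1-m)*(1/2) + m*(k2$3 + 1/3 - t2)"
    "P = (1-m) *\<^sub>R (z2 + PX s2) + m *\<^sub>R (z2 + k2 + PY t2)"
    using seg_coords[OF P2] by blast
  define D1 where "D1 = z1$1 - z2$1"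
  define D2 where "D2 = z1$2 - z2$2"
  define D3 where "D3 = z1$3 - z2$3"
  have D: "D1 \<in> \<int>" "D2 \<in> \<int>" "D3 \<in> \<int>"
    using zi unfolding integer_vector_def D1_def D2_def D3_def by auto
  have N: "D1 + D2 + D3 \<in> \<int>" using D by auto
  have A1: "l = 0 \<and> m = 0 \<Longrightarrow> ?thesis" using l(6) m(6) by auto
  have A2: "l = 1 \<and> m = 1 \<Longrightarrow> ?thesis" using l(6) m(6) by auto
  define ka where "ka = k1$1 + k1$2 + k1$3"
  define kb where "kb = k2$1 + k2$2 + k2$3"
  have dsum: "\<And>i. i<3 \<Longrightarrow> (dir i)$1 + (dir i)$2 + (dir i)$3 = 1"
  proof -
    fix i :: nat assume "i < 3" then have "i = 0 \<or> i = 1 \<or> i = 2" by auto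
    then show "(dir i)$1 + (dir i)$2 + (dir i)$3 = 1" by (auto simp: dir_def)
  qed
  have kav: "(ka = 0 \<and> k1 = 0) \<or> (ka = 1 \<and> (\<exists>i<3. k1 = dir i \<and> t1 = tau i))"
    using k1 dsum unfolding ka_def by auto
  have kbv: "(kb = 0 \<and> k2 = 0) \<or> (kb = 1 \<and> (\<exists>i<3. k2 = dir i \<and> t2 = tau i))"
    using k2 dsum unfolding kb_def by auto
  have sa: "P$1+P$2+P$3 = z1$1+z1$2+z1$3 + 3/2 + l*(ka - 1/2)"
    unfolding l(3,4,5) ka_def by (simp add: algebra_simps, simp add: field_simps)
  have sb: "P$1+P$2+P$3 = z2$1+z2$2+z2$3 + 3/2 + m*(kb - 1/2)"
    unfolding m(3,4,5) kb_def by (simp add: algebra_simps, simp add: field_simps)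
  have sum: "D1 + D2 + D3 + l*(ka - 1/2) - m*(kb - 1/2) = 0"
    using sa sb unfolding D1_def D2_def D3_def by linarith
  show ?thesis
  proof (cases "ka = kb")
    case False
    then consider "ka = 0" "kb = 1" | "ka = 1" "kb = 0" using kav kbv by auto
    then show ?thesis
    proof cases
      case 1
      then have "D1 + D2 + D3 = (l + m)/2" using sum by simp
      then have "D1 + D2 + D3 = 0 \<or> D1 + D2 + D3 = 1" using int01[OF N] l(1,2) m(1,2) by auto
      then show ?thesis using A1 A2 \<open>D1 + D2 + D3 = (l + m)/2\<close> l(1,2) m(1,2) by auto
    next
      case 2
      then have "D1 + D2 + D3 = -(l + m)/2" using sum by simp
      then have "-(D1 + D2 + D3) = 0 \<or> -(D1 + D2 + D3) = 1" using int01[OF Ints_minus[OF N]] l(1,2) m(1,2) by auto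
      then show ?thesis using A1 A2 \<open>D1 + D2 + D3 = -(l + m)/2\<close> l(1,2) m(1,2) by auto
    qed
  next
    case True
    have "\<bar>D1 + D2 + D3\<bar> < 1"
      using kav True sum l(1,2) m(1,2) by auto
    then have "D1 + D2 + D3 = 0" using int_small N by blast
    then have lm: "m = l" using kav True sum by auto
    define \<alpha> where "\<alpha> = (1-l)*(s1-s2)"
    define \<beta> where "\<beta> = l*(t1-t2)"
    have c1: "D1 + \<alpha> + l*(k1$1 - k2$1) = 0"
      using l(3) m(3) unfolding lm \<alpha>_def D1_def by algebra
    have c2: "D2 - \<alpha> + \<beta> + l*(k1$2 - k2$2) = 0"
      using l(4) m(4) unfolding lm \<alpha>_def \<beta>_def D2_def by algebra
    have c3: "D3 - \<beta> + l*(k1$3 - k2$3) = 0"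
      using l(5) m(5) unfolding lm \<beta>_def D3_def by algebra
    have ba: "\<bar>\<alpha>\<bar> < 1/2" unfolding \<alpha>_def
      by (rule small_mult[OF _ _ abs_diff_small[OF s]]) (use l(1,2) in auto)
    have bb: "\<bar>\<beta>\<bar> < 1/2" unfolding \<beta>_def
      by (rule small_mult[OF l(1,2) abs_diff_small[OF t]]) simp
    show ?thesis
    proof (cases "k1 = k2")
      case True
      have e1: "D1 + \<alpha> = 0" using c1 True by simp
      have e3: "D3 - \<beta> = 0" using c3 True by simp
      have "D1 = 0" using int_small[OF D(1)] e1 ba by simp
      then have a0: "\<alpha> = 0" using e1 by simp
      have "D3 = 0" using int_small[OF D(3)] e3 bb by simp
      then have b0: "\<beta> = 0" using e3 by simp
      have "D2 = 0" using c2 True a0 b0 by simp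
      have za: "l = 1 \<or> s1 = s2" using a0 unfolding \<alpha>_def by auto
      have zb: "l = 0 \<or> t1 = t2" using b0 unfolding \<beta>_def by auto
      have zz: "z1 = z2" using \<open>D1 = 0\<close> \<open>D2 = 0\<close> \<open>D3 = 0\<close>
        unfolding vec3_eq D1_def D2_def D3_def by simp
      show ?thesis
        using za zb A1 A2 lm zz True by auto
    next
      case False
      then obtain i j where ij: "i<3" "j<3" "i \<noteq> j" "k1 = dir i" "t1 = tau i" "k2 = dir j" "t2 = tau j"
        using kav kbv \<open>ka = kb\<close> by auto
      have bv: "\<beta> = l * ((real i - real j)/16)" unfolding \<beta>_def ij tau_def by (simp add: field_simps)
      from ij(1-3) have "(i=0\<and>j=1) \<or> (i=1\<and>j=0) \<or> (i=0\<and>j=2) \<or> (i=2\<and>j=0) \<or> (i=1\<and>j=2) \<or> (i=2\<and>j=1)"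
        by auto
      then have "l = 0"
      proof (elim disjE conjE)
        assume "i = 0" "j = 1"
        then have "D3 = -l/16" using c3 bv ij by (simp add: dir_def)
        then have "D3 = 0" using int_small[OF D(3)] l(1,2) by simp
        then show "l = 0" using \<open>D3 = -l/16\<close> by simp
      next
        assume "i = 1" "j = 0"
        then have "D3 = l/16" using c3 bv ij by (simp add: dir_def)
        then have "D3 = 0" using int_small[OF D(3)] l(1,2) by simp
        then show "l = 0" using \<open>D3 = l/16\<close> by simp
      next
        assume "i = 1" "j = 2"
        then have "D3 = 15*l/16" using c3 bv ij by (simp add: dir_def)
        then have "D3 = 0" using int_small[OF D(3)] l(1,2) by simp
        then show "l = 0" using \<open>D3 = 15*l/16\<close> by simp
      next
        assume "i = 2" "j = 1"
        then have "D3 = -15*l/16" using c3 bv ij by (simp add: dir_def)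
        then have "D3 = 0" using int_small[OF D(3)] l(1,2) by simp
        then show "l = 0" using \<open>D3 = -15*l/16\<close> by simp
      next
        assume "i = 0" "j = 2"
        then have e2: "D2 = \<alpha> - \<beta>" using c2 ij by (simp add: dir_def)
        then have "D2 = 0" using int_small[OF D(2)] ba bb by simp
        then have "D1 = -7*l/8" using c1 e2 bv ij \<open>i=0\<close> \<open>j=2\<close> by (simp add: dir_def)
        then have "D1 = 0" using int_small[OF D(1)] l(1,2) by simp
        then show "l = 0" using \<open>D1 = -7*l/8\<close> by simp
      next
        assume "i = 2" "j = 0"
        then have e2: "D2 = \<alpha> - \<beta>" using c2 ij by (simp add: dir_def)
        then have "D2 = 0" using int_small[OF D(2)] ba bb by simp
        then have "D1 = 7*l/8" using c1 e2 bv ij \<open>i=2\<close> \<open>j=0\<close> by (simp add: dir_def)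
        then have "D1 = 0" using int_small[OF D(1)] l(1,2) by simp
        then show "l = 0" using \<open>D1 = 7*l/8\<close> by simp
      qed
      then show ?thesis using A1 lm by simp
    qed
  qed
qed


datatype av = XV "real^3" "nat list" bool | YV "real^3" nat "nat list"

definition validP :: "nat \<Rightarrow> nat list \<Rightarrow> bool" where
  "validP m p \<longleftrightarrow> length p = 2*m \<and> (\<forall>x\<in>set p. x < m)"
definition validL :: "nat \<Rightarrow> nat \<Rightarrow> nat list \<Rightarrow> bool" where
  "validL m i w \<longleftrightarrow> i < 2*m \<and> validP m w \<and> w!i = 0"
definition onl :: "nat list \<Rightarrow> nat \<Rightarrow> nat list \<Rightarrow> bool" where
  "onl p i w \<longleftrightarrow> (\<forall>j<length p. j \<noteq> i \<longrightarrow> p!j = w!j)"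
definition zeros :: "nat \<Rightarrow> nat list" where "zeros m = replicate (2*m) 0"
definition delta :: "nat \<Rightarrow> nat list \<Rightarrow> nat \<Rightarrow> real^3" where
  "delta m p i = (if i < 3 \<and> p = zeros m then dir i else 0)"
definition xy :: "nat \<Rightarrow> real^3 \<Rightarrow> nat list \<Rightarrow> real^3 \<Rightarrow> nat \<Rightarrow> nat list \<Rightarrow> bool" where
  "xy m z p y i w \<longleftrightarrow> integer_vector z \<and> validP m p \<and> validL m i w \<and> onl p i w \<and> y = z + delta m p i"

fun adjA :: "nat \<Rightarrow> av \<Rightarrow> av \<Rightarrow> bool" where
  "adjA m (XV z p b) (YV y i w) = xy m z p y i w"
| "adjA m (YV y i w) (XV z p b) = xy m z p y i w"
| "adjA m (XV z p b) (XV z' p' b') = False"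
| "adjA m (YV y i w) (YV y' i' w') = False"

fun validV :: "nat \<Rightarrow> av \<Rightarrow> bool" where
  "validV m (XV z p b) = (integer_vector z \<and> validP m p)"
| "validV m (YV y i w) = (integer_vector y \<and> validL m i w)"

lemma validP_len: "validP m p \<Longrightarrow> length p = 2*m" by (simp add: validP_def)

lemma validP_upd: "validP m p \<Longrightarrow> c < m \<Longrightarrow> validP m (p[i:=c])"
  unfolding validP_def by (auto dest: set_update_subset_insert[THEN subsetD])

lemma zeros_valid: "0 < m \<Longrightarrow> validP m (zeros m)" by (simp add: validP_def zeros_def)

lemma line_thru: "validP m p \<Longrightarrow> i < 2*m \<Longrightarrow> 0 < m \<Longrightarrow> validL m i (p[i:=0]) \<and> onl p i (p[i:=0])"
  unfolding validL_def onl_def by (auto simp: validP_upd validP_len nth_list_update)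

lemma onl_w: "validP m p \<Longrightarrow> validL m i w \<Longrightarrow> onl p i w \<Longrightarrow> w = p[i:=0]"
  unfolding validL_def onl_def validP_def
  by (intro nth_equalityI) (auto simp: nth_list_update)

lemma onl_p: "validP m p \<Longrightarrow> validL m i w \<Longrightarrow> onl p i w \<Longrightarrow> p = w[i:=p!i]"
  unfolding validL_def onl_def validP_def
  by (intro nth_equalityI) (auto simp: nth_list_update)

lemma onl_upd: "validL m i w \<Longrightarrow> onl (w[i:=c]) i w"
  unfolding validL_def onl_def by (auto simp: nth_list_update)

lemma line_unique:
  assumes "validP m p" "validP m q" "p \<noteq> q" "validL m i w" "validL m i' w'"
    "onl p i w" "onl q i w" "onl p i' w'" "onl q i' w'"
  shows "i = i' \<and> w = w'"
proof -
  have "i = i'"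
  proof (rule ccontr)
    assume ne: "i \<noteq> i'"
    have "p = q"
    proof (rule nth_equalityI)
      show "length p = length q" using assms(1,2) by (simp add: validP_len)
      fix j assume "j < length p"
      then show "p!j = q!j"
        using assms(6-9) ne assms(1,2) unfolding onl_def by (cases "j = i") (auto simp: validP_len)
    qed
    then show False using assms(3) by simp
  qed
  then show ?thesis using onl_w[OF assms(1,4,6)] onl_w[OF assms(1,5,8)] by simp
qed

lemma no_triangle:
  assumes v: "validP m p0" "validP m p1" "validP m p2"
    and d: "p0 \<noteq> p1" "p1 \<noteq> p2" "p2 \<noteq> p0"
    and o: "onl p0 i0 w0" "onl p1 i0 w0" "onl p1 i1 w1" "onl p2 i1 w1" "onl p2 i2 w2" "onl p0 i2 w2"
    and l: "validL m i0 w0" "validL m i1 w1" "validL m i2 w2"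
  shows "i0 = i1 \<and> w0 = w1 \<and> i1 = i2 \<and> w1 = w2"
proof -
  have len: "length p0 = 2*m" "length p1 = 2*m" "length p2 = 2*m" using v by (auto simp: validP_len)
  have i0: "i0 < 2*m" using l by (simp add: validL_def)
  have i1: "i1 < 2*m" using l by (simp add: validL_def)
  have diff: "\<And>p q i w. length p = 2*m \<Longrightarrow> length q = 2*m \<Longrightarrow> p \<noteq> q \<Longrightarrow> onl p i w \<Longrightarrow> onl q i w \<Longrightarrow> i < 2*m \<and> p!i \<noteq> q!i"
  proof -
    fix p q i w assume a: "length p = 2*m" "length q = 2*m" "p \<noteq> q" "onl p i w" "onl q i w"
    obtain j where j: "j < 2*m" "p!j \<noteq> q!j" using a(1-3) nth_equalityI by (metis)
    then have "j = i" using a unfolding onl_def by (metis)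
    then show "i < 2*m \<and> p!i \<noteq> q!i" using j by simp
  qed
  have agree: "\<And>p q i w j. length p = 2*m \<Longrightarrow> length q = 2*m \<Longrightarrow> onl p i w \<Longrightarrow> onl q i w \<Longrightarrow> j < 2*m \<Longrightarrow> j \<noteq> i \<Longrightarrow> p!j = q!j"
    unfolding onl_def by auto
  have "i0 = i1"
  proof (rule ccontr)
    assume ne: "i0 \<noteq> i1"
    have a: "p0!i0 \<noteq> p2!i0"
      using diff[OF len(1,2) d(1) o(1,2)] agree[OF len(2,3) o(3,4) i0 ne] by simp
    have "i0 = i2" using agree[OF len(3,1) o(5,6) i0] a by metis
    have b: "p0!i1 \<noteq> p2!i1"
      using diff[OF len(2,3) d(2) o(3,4)] agree[OF len(1,2) o(1,2) i1] ne by metis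
    have "i1 = i2" using agree[OF len(3,1) o(5,6) i1] b by metis
    then show False using ne \<open>i0 = i2\<close> by simp
  qed
  moreover have "i0 = i2"
  proof (rule ccontr)
    assume ne: "i0 \<noteq> i2"
    have h: "i2 < 2*m" "p2!i2 \<noteq> p0!i2" using diff[OF len(3,1) d(3) o(5,6)] by auto
    have "p0!i2 = p1!i2" using agree[OF len(1,2) o(1,2) h(1)] ne by simp
    moreover have "p1!i2 = p2!i2" using agree[OF len(2,3) o(3,4) h(1)] ne \<open>i0 = i1\<close> by simp
    ultimately show False using h by simp
  qed
  ultimately show ?thesis
    using onl_w[OF v(1) l(1) o(1)] onl_w[OF v(2) l(2) o(3)] onl_w[OF v(1) l(3) o(6)]
      onl_w[OF v(2) l(1) o(2)] by simp
qed

lemma adjX: "adjA m (XV z p b) v \<Longrightarrow> \<exists>y i w. v = YV y i w \<and> xy m z p y i w"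
  by (cases v) auto
lemma adjY: "adjA m (YV y i w) v \<Longrightarrow> \<exists>z p b. v = XV z p b \<and> xy m z p y i w"
  by (cases v) auto
lemma adj_sym: "adjA m u v = adjA m v u"
  by (cases u; cases v) auto

lemma c4_twins:
  assumes "adjA m (XV z0 p0 b0) a1" "adjA m a1 a2" "adjA m a2 a3" "adjA m a3 (XV z0 p0 b0)"
    "XV z0 p0 b0 \<noteq> a2" "a1 \<noteq> a3"
  shows "\<exists>b'. a2 = XV z0 p0 b'"
proof -
  obtain y0 i0 w0 where a1: "a1 = YV y0 i0 w0" "xy m z0 p0 y0 i0 w0" using adjX[OF assms(1)] by blast
  obtain z1 p1 b1 where a2: "a2 = XV z1 p1 b1" "xy m z1 p1 y0 i0 w0" using adjY assms(2) a1 by blast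
  obtain y1 i1 w1 where a3: "a3 = YV y1 i1 w1" "xy m z1 p1 y1 i1 w1" using adjX assms(3) a2 by blast
  have h4: "xy m z0 p0 y1 i1 w1" using assms(4) a3 by simp
  have "p0 = p1"
  proof (rule ccontr)
    assume "p0 \<noteq> p1"
    then have "i0 = i1 \<and> w0 = w1"
      using line_unique[of m p0 p1 i0 w0 i1 w1] a1 a2 a3 h4 unfolding xy_def by blast
    then have "a1 = a3" using a1 a3 h4 unfolding xy_def by simp
    then show False using assms(6) by simp
  qed
  then have "z0 = z1" using a1 a2 unfolding xy_def by simp
  then show ?thesis using a2 \<open>p0 = p1\<close> by simp
qed

lemma c6_free:
  assumes "adjA m (XV z0 p0 b0) a1" "adjA m a1 a2" "adjA m a2 a3" "adjA m a3 a4" "adjA m a4 a5"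
    "adjA m a5 (XV z0 p0 b0)" "distinct [XV z0 p0 b0, a1, a2, a3, a4, a5]"
  shows False
proof -
  obtain y0 i0 w0 where a1: "a1 = YV y0 i0 w0" "xy m z0 p0 y0 i0 w0" using adjX[OF assms(1)] by blast
  obtain z1 p1 b1 where a2: "a2 = XV z1 p1 b1" "xy m z1 p1 y0 i0 w0" using adjY assms(2) a1 by blast
  obtain y1 i1 w1 where a3: "a3 = YV y1 i1 w1" "xy m z1 p1 y1 i1 w1" using adjX assms(3) a2 by blast
  obtain z2 p2 b2 where a4: "a4 = XV z2 p2 b2" "xy m z2 p2 y1 i1 w1" using adjY assms(4) a3 by blast
  obtain y2 i2 w2 where a5: "a5 = YV y2 i2 w2" "xy m z2 p2 y2 i2 w2" using adjX assms(5) a4 by blast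
  have h6: "xy m z0 p0 y2 i2 w2" using assms(6) a5 by simp
  note all = a1(2) a2(2) a3(2) a4(2) a5(2) h6
  have dist: "a1 \<noteq> a3" "a3 \<noteq> a5" "a1 \<noteq> a5" "XV z0 p0 b0 \<noteq> a2" "a2 \<noteq> a4" "XV z0 p0 b0 \<noteq> a4"
    using assms(7) by auto
  show False
  proof (cases "p0 = p1")
    case True
    then have "z0 = z1" using all unfolding xy_def by simp
    show False
    proof (cases "p2 = p0")
      case True
      then have "z2 = z0" using all \<open>p0 = p1\<close> \<open>z0 = z1\<close> unfolding xy_def by simp
      then show False using dist a2 a4 \<open>z0 = z1\<close> \<open>p0 = p1\<close> True by (cases b0; cases b1; cases b2) auto
    next
      case False
      then have "i1 = i2 \<and> w1 = w2"
        using line_unique[of m p2 p1 i1 w1 i2 w2] all True unfolding xy_def by metis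
      then have "a3 = a5" using all a3 a5 True \<open>z0 = z1\<close> unfolding xy_def by simp
      then show False using dist by simp
    qed
  next
    case False
    show False
    proof (cases "p1 = p2")
      case True
      then have "z1 = z2" using all unfolding xy_def by simp
      have "i0 = i2 \<and> w0 = w2"
        using line_unique[of m p0 p1 i0 w0 i2 w2] all True False unfolding xy_def by metis
      then have "a1 = a5" using all a1 a5 unfolding xy_def by simp
      then show False using dist by simp
    next
      case False2: False
      show False
      proof (cases "p2 = p0")
        case True
        then have "z2 = z0" using all unfolding xy_def by simp
        have "i0 = i1 \<and> w0 = w1"
          using line_unique[of m p0 p1 i0 w0 i1 w1] all True False unfolding xy_def by metis
        then have "a1 = a3" using all a1 a3 \<open>z2 = z0\<close> True unfolding xy_def by auto
        then show False using dist by simp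
      next
        case False3: False
        have "i0 = i1 \<and> w0 = w1 \<and> i1 = i2 \<and> w1 = w2"
          using no_triangle[of m p0 p1 p2 i0 w0 i1 w1 i2 w2] all False False2 False3
          unfolding xy_def by metis
        then have "a1 = a5" using all a1 a5 unfolding xy_def by simp
        then show False using dist by simp
      qed
    qed
  qed
qed


definition sX :: "nat list \<Rightarrow> bool \<Rightarrow> real" where
  "sX p b = 1 / (4 + real (to_nat (p, b)))"
definition tY :: "nat \<Rightarrow> nat \<Rightarrow> nat list \<Rightarrow> real" where
  "tY m i w = (if i < 3 \<and> w = zeros m then tau i else 1 / (8 + real (to_nat (i, w))))"

fun emb :: "nat \<Rightarrow> av \<Rightarrow> real^3" where
  "emb m (XV z p b) = z + PX (sX p b)"
| "emb m (YV y i w) = y + PY (tY m i w)"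

lemma sX_bounds: "0 < sX p b" "sX p b \<le> 1/4"
  unfolding sX_def by (auto simp: field_simps)
lemma tY_bounds: "0 < tY m i w" "tY m i w \<le> 5/16"
  unfolding tY_def tau_def by (auto simp: field_simps)

lemma iv_nth: "integer_vector z \<Longrightarrow> z$k \<in> \<int>" by (simp add: integer_vector_def)

lemma emb_sumX: "(emb m (XV z p b))$1 + (emb m (XV z p b))$2 + (emb m (XV z p b))$3 = z$1+z$2+z$3 + 3/2"
  by (simp add: PX_def)
lemma emb_sumY: "(emb m (YV y i w))$1 + (emb m (YV y i w))$2 + (emb m (YV y i w))$3 = y$1+y$2+y$3 + 1"
  by (simp add: PY_def)

lemma sX_inj: "sX p b = sX p' b' \<Longrightarrow> p = p' \<and> b = b'"
  unfolding sX_def by (auto simp: field_simps dest: injD[OF inj_to_nat])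

lemma tY_inj: "validL m i w \<Longrightarrow> validL m i' w' \<Longrightarrow> tY m i w = tY m i' w' \<Longrightarrow> i = i' \<and> w = w'"
proof -
  assume a: "validL m i w" "validL m i' w'" "tY m i w = tY m i' w'"
  have g: "\<And>k::nat. 1 / (8 + real k) \<le> 1/8" by (simp add: field_simps)
  have t: "\<And>i. i < 3 \<Longrightarrow> 1/8 < tau i" unfolding tau_def by simp
  show ?thesis
  proof (cases "i < 3 \<and> w = zeros m")
    case True
    show ?thesis
    proof (cases "i' < 3 \<and> w' = zeros m")
      case True2: True
      then show ?thesis using True a(3) unfolding tY_def tau_def by simp
    next
      case False
      have "tY m i' w' \<le> 1/8" using False g unfolding tY_def by auto
      moreover have "tY m i w > 1/8" using True t unfolding tY_def by simp
      ultimately show ?thesis using a(3) by simp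
    qed
  next
    case False
    show ?thesis
    proof (cases "i' < 3 \<and> w' = zeros m")
      case True2: True
      show ?thesis
      proof -
        have "tY m i w \<le> 1/8" using False g unfolding tY_def by auto
        moreover have "tY m i' w' > 1/8" using True2 t unfolding tY_def by simp
        ultimately show ?thesis using a(3) by simp
      qed
    next
      case False2: False
      then show ?thesis using False a(3) unfolding tY_def
        by (auto simp: field_simps dest: injD[OF inj_to_nat])
    qed
  qed
qed

lemma half_not_int: "(1/2::real) \<notin> \<int>"
proof
  assume "(1/2::real) \<in> \<int>"
  then obtain k where "(1/2::real) = of_int k" by (auto elim: Ints_cases)
  then have "(1::real) = 2 * of_int k" by simp
  then have "(1::int) = 2 * k" by (metis of_int_eq_iff of_int_mult of_int_numeral of_int_1)
  then show False by presburger
qed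

lemma emb_inj: "validV m u \<Longrightarrow> validV m v \<Longrightarrow> emb m u = emb m v \<Longrightarrow> u = v"
proof (cases u; cases v)
  fix z p b z' p' b'
  assume a: "validV m u" "validV m v" "emb m u = emb m v" "u = XV z p b" "v = XV z' p' b'"
  then have e: "z + PX (sX p b) = z' + PX (sX p' b')" by simp
  then have c: "z$1 + 1/2 + sX p b = z'$1 + 1/2 + sX p' b'" "z$2 + 1/2 - sX p b = z'$2 + 1/2 - sX p' b'"
    "z$3 = z'$3" unfolding vec3_eq by (simp_all add: PX_def)
  have "z$1 - z'$1 = 0"
    using int_small[of "z$1 - z'$1"] c(1) sX_bounds[of p b] sX_bounds[of p' b'] a iv_nth
    by (auto simp: abs_less_iff)
  then show "u = v" using c a sX_inj[of p b p' b'] vec3_eq[of z z'] by auto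
next
  fix z p b y i w
  assume a: "validV m u" "validV m v" "emb m u = emb m v" "u = XV z p b" "v = YV y i w"
  have "(emb m u)$1 + (emb m u)$2 + (emb m u)$3 = (emb m v)$1 + (emb m v)$2 + (emb m v)$3" using a(3) by simp
  then have e: "z$1+z$2+z$3 + 3/2 = y$1+y$2+y$3 + 1" using emb_sumX[of m z p b] emb_sumY[of m y i w] a(4,5) by simp
  have ii: "(y$1+y$2+y$3) - (z$1+z$2+z$3) \<in> \<int>" using a iv_nth by auto
  have "(y$1+y$2+y$3) - (z$1+z$2+z$3) = 1/2" using e by linarith
  then have "(1/2::real) \<in> \<int>" using ii by metis
  then show "u = v" using half_not_int by blast 
next
  fix z p b y i w
  assume a: "validV m u" "validV m v" "emb m u = emb m v" "v = XV z p b" "u = YV y i w"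
  have "(emb m u)$1 + (emb m u)$2 + (emb m u)$3 = (emb m v)$1 + (emb m v)$2 + (emb m v)$3" using a(3) by simp
  then have e: "z$1+z$2+z$3 + 3/2 = y$1+y$2+y$3 + 1" using emb_sumX[of m z p b] emb_sumY[of m y i w] a(4,5) by simp
  have ii: "(y$1+y$2+y$3) - (z$1+z$2+z$3) \<in> \<int>" using a iv_nth by auto
  have "(y$1+y$2+y$3) - (z$1+z$2+z$3) = 1/2" using e by linarith
  then have "(1/2::real) \<in> \<int>" using ii by metis
  then show "u = v" using half_not_int by blast
next
  fix y i w y' i' w'
  assume a: "validV m u" "validV m v" "emb m u = emb m v" "u = YV y i w" "v = YV y' i' w'"
  then have e: "y + PY (tY m i w) = y' + PY (tY m i' w')" by simp
  then have c: "y$1 = y'$1" "y$2 + 1/3 + tY m i w = y'$2 + 1/3 + tY m i' w'"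
    "y$3 + 1/3 - tY m i w = y'$3 + 1/3 - tY m i' w'" unfolding vec3_eq by (simp_all add: PY_def)
  have "y$2 - y'$2 = 0"
    using int_small[of "y$2 - y'$2"] c(2) tY_bounds[of m i w] tY_bounds[of m i' w'] a iv_nth
    by (auto simp: abs_less_iff)
  then show "u = v" using c a tY_inj[of m i w i' w'] vec3_eq[of y y'] by auto
qed


lemma iv_add: "integer_vector a \<Longrightarrow> integer_vector b \<Longrightarrow> integer_vector (a + b)"
  unfolding integer_vector_def by auto
lemma iv_diff: "integer_vector a \<Longrightarrow> integer_vector b \<Longrightarrow> integer_vector (a - b)"
  unfolding integer_vector_def by auto
lemma iv_dir: "integer_vector (dir i)"
  unfolding integer_vector_def dir_def mk3_def by auto
lemma iv_delta: "integer_vector (delta m p i)"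
  unfolding delta_def using iv_dir by (auto simp: integer_vector_def)

lemma adj_valid: "adjA m u v \<Longrightarrow> validV m u \<and> validV m v"
  by (cases u; cases v) (auto simp: xy_def iv_add iv_delta)

definition VV :: "nat \<Rightarrow> (real^3) set" where "VV m = emb m ` {u. validV m u}"
definition EE :: "nat \<Rightarrow> real^3 \<Rightarrow> real^3 \<Rightarrow> bool" where
  "EE m x y \<longleftrightarrow> (\<exists>u v. adjA m u v \<and> x = emb m u \<and> y = emb m v)"
definition lift :: "nat \<Rightarrow> real^3 \<Rightarrow> av" where
  "lift m x = (THE u. validV m u \<and> emb m u = x)"

lemma lift_emb: "validV m u \<Longrightarrow> lift m (emb m u) = u"
  unfolding lift_def by (rule the_equality) (auto dest: emb_inj)
lemma lift_VV: "x \<in> VV m \<Longrightarrow> validV m (lift m x) \<and> emb m (lift m x) = x"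
  unfolding VV_def using lift_emb by auto
lemma EE_emb1: assumes "validV m u" shows "EE m (emb m u) x \<longleftrightarrow> (\<exists>v. adjA m u v \<and> x = emb m v)"
proof
  assume "EE m (emb m u) x"
  then obtain ua va where "adjA m ua va" "emb m u = emb m ua" "x = emb m va" unfolding EE_def by blast
  moreover then have "ua = u" using emb_inj[of m ua u] adj_valid assms by metis
  ultimately show "\<exists>v. adjA m u v \<and> x = emb m v" by blast
qed (auto simp: EE_def)

lemma EE_emb: assumes "validV m u" "validV m v" shows "EE m (emb m u) (emb m v) \<longleftrightarrow> adjA m u v"
  using EE_emb1[OF assms(1)] emb_inj[OF _ assms(2)] adj_valid by metis
lemma EE_VV: "EE m x y \<Longrightarrow> x \<in> VV m \<and> y \<in> VV m"
  unfolding EE_def VV_def by (auto dest: adj_valid)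
lemma EE_lift: "EE m x y \<Longrightarrow> adjA m (lift m x) (lift m y)"
proof -
  assume "EE m x y"
  then obtain u v where "adjA m u v" "x = emb m u" "y = emb m v" unfolding EE_def by blast
  then show ?thesis using adj_valid[of m u v] lift_emb by metis
qed
lemma EE_sym: "EE m x y \<Longrightarrow> EE m y x"
  unfolding EE_def using adj_sym by blast

lemma nbr_emb: "validV m u \<Longrightarrow> {x. EE m (emb m u) x} = emb m ` {v. adjA m u v}"
  unfolding EE_def by (auto dest: adj_valid emb_inj)

lemma nbrX: assumes "validV m (XV z p b)" "0 < m"
  shows "{v. adjA m (XV z p b) v} = (\<lambda>i. YV (z + delta m p i) i (p[i:=0])) ` {..<2*m}"
proof
  show "{v. adjA m (XV z p b) v} \<subseteq> (\<lambda>i. YV (z + delta m p i) i (p[i:=0])) ` {..<2*m}"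
  proof
    fix v assume "v \<in> {v. adjA m (XV z p b) v}"
    then obtain y i w where v: "v = YV y i w" "xy m z p y i w" using adjX by blast
    then have "w = p[i:=0]" "i < 2*m" using onl_w[of m p i w] unfolding xy_def validL_def by auto
    then show "v \<in> (\<lambda>i. YV (z + delta m p i) i (p[i:=0])) ` {..<2*m}" using v unfolding xy_def by auto
  qed
  show "(\<lambda>i. YV (z + delta m p i) i (p[i:=0])) ` {..<2*m} \<subseteq> {v. adjA m (XV z p b) v}"
    using assms line_thru[of m p] by (auto simp: xy_def)
qed

lemma card_nbrX: assumes "validV m (XV z p b)" "0 < m"
  shows "finite {v. adjA m (XV z p b) v} \<and> card {v. adjA m (XV z p b) v} = 2*m"
proof -
  have "inj_on (\<lambda>i. YV (z + delta m p i) i (p[i:=0])) {..<2*m}" by (auto simp: inj_on_def)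
  then show ?thesis unfolding nbrX[OF assms] by (simp add: card_image)
qed

lemma nbrY: assumes "validV m (YV y i w)"
  shows "{v. adjA m (YV y i w) v} = (\<lambda>(c,b). XV (y - delta m (w[i:=c]) i) (w[i:=c]) b) ` ({..<m} \<times> UNIV)"
proof
  show "{v. adjA m (YV y i w) v} \<subseteq> (\<lambda>(c,b). XV (y - delta m (w[i:=c]) i) (w[i:=c]) b) ` ({..<m} \<times> UNIV)"
  proof
    fix v assume "v \<in> {v. adjA m (YV y i w) v}"
    then obtain z p b where v: "v = XV z p b" "xy m z p y i w" using adjY by blast
    then have p: "p = w[i:=p!i]" using onl_p[of m p i w] unfolding xy_def by auto
    have "p!i < m" using v(2) unfolding xy_def validP_def validL_def by auto
    then show "v \<in> (\<lambda>(c,b). XV (y - delta m (w[i:=c]) i) (w[i:=c]) b) ` ({..<m} \<times> UNIV)"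
      using v p unfolding xy_def by (auto intro!: image_eqI[of _ _ "(p!i, b)"])
  qed
  show "(\<lambda>(c,b). XV (y - delta m (w[i:=c]) i) (w[i:=c]) b) ` ({..<m} \<times> UNIV) \<subseteq> {v. adjA m (YV y i w) v}"
    using assms by (auto simp: xy_def validL_def validP_upd onl_upd iv_diff iv_delta)
qed

lemma card_nbrY: assumes "validV m (YV y i w)"
  shows "finite {v. adjA m (YV y i w) v} \<and> card {v. adjA m (YV y i w) v} = 2*m"
proof -
  have il: "i < length w" using assms by (simp add: validL_def validP_def)
  have "inj_on (\<lambda>(c,b). XV (y - delta m (w[i:=c]) i) (w[i:=c]) b) ({..<m} \<times> (UNIV::bool set))"
  proof (rule inj_onI, clarsimp)
    fix c b c' b' assume "w[i := c] = w[i := c']"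
    then have "w[i := c] ! i = w[i := c'] ! i" by simp
    then show "c = c'" using il by simp
  qed
  moreover have "card ({..<m} \<times> (UNIV::bool set)) = 2*m" by (simp add: card_cartesian_product)
  ultimately show ?thesis unfolding nbrY[OF assms] by (simp add: card_image)
qed

lemma card_nbr: assumes "validV m u" "0 < m"
  shows "finite {x. EE m (emb m u) x} \<and> card {x. EE m (emb m u) x} = 2*m"
proof -
  have f: "finite {v. adjA m u v} \<and> card {v. adjA m u v} = 2*m"
    using assms card_nbrX card_nbrY by (cases u) auto
  have "inj_on (emb m) {v. adjA m u v}" by (auto intro!: inj_onI dest: adj_valid emb_inj)
  then show ?thesis using f unfolding nbr_emb[OF assms(1)] by (simp add: card_image)
qed

lemma twin_nbr: assumes "validV m (XV z p b)" shows "{x. EE m (emb m (XV z p b)) x} = {x. EE m (emb m (XV z p b')) x}"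
proof -
  have "\<And>v. adjA m (XV z p b) v = adjA m (XV z p b') v" by (case_tac v) auto
  moreover have "validV m (XV z p b) = validV m (XV z p b')" by simp
  ultimately show ?thesis using EE_emb1[of m "XV z p b"] EE_emb1[of m "XV z p b'"]
    using assms by auto
qed


fun cubeA :: "av \<Rightarrow> real^3" where
  "cubeA (XV z p b) = z" | "cubeA (YV y i w) = y"

fun offA :: "nat \<Rightarrow> av \<Rightarrow> real^3" where
  "offA m (XV z p b) = PX (sX p b)" | "offA m (YV y i w) = PY (tY m i w)"

lemma emb_split: "emb m u = cubeA u + offA m u" by (cases u) auto

lemma off_bounds: "0 < offA m u $ j \<and> offA m u $ j < 1"
proof (cases u)
  case (XV z p b)
  then show ?thesis using sX_bounds[of p b] exhaust_3[of j] by (auto simp: PX_def)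
next
  case (YV y i w)
  then show ?thesis using tY_bounds[of m i w] exhaust_3[of j] by (auto simp: PY_def)
qed

lemma valid_iv: "validV m u \<Longrightarrow> integer_vector (cubeA u)" by (cases u) auto

lemma floor_int_off: "(x::real) \<in> \<int> \<Longrightarrow> 0 < c \<Longrightarrow> c < 1 \<Longrightarrow> \<lfloor>x + c\<rfloor> = \<lfloor>x\<rfloor>"
  by (auto elim!: Ints_cases simp: floor_eq_iff)

lemma cube_emb: "validV m u \<Longrightarrow> cube_of (emb m u) $ j = \<lfloor>cubeA u $ j\<rfloor>"
  unfolding cube_of_def emb_split using floor_int_off[of "cubeA u $ j" "offA m u $ j"] off_bounds
    valid_iv iv_nth by auto

lemma cube_emb_eq: "validV m u \<Longrightarrow> cube_of (emb m u) = (\<chi> j. \<lfloor>cubeA u $ j\<rfloor>)"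
  using cube_emb by (simp add: vec_eq_iff)

lemma nonint: "validV m u \<Longrightarrow> emb m u $ j \<notin> \<int>"
proof
  assume a: "validV m u" "emb m u $ j \<in> \<int>"
  have "cubeA u $ j \<in> \<int>" using a valid_iv iv_nth by blast
  then have "offA m u $ j \<in> \<int>" using a(2) unfolding emb_split by (metis Ints_diff add_diff_cancel_left' vector_add_component)
  then show False using off_bounds[of m u j] by (auto elim!: Ints_cases)
qed

fun shiftA :: "real^3 \<Rightarrow> av \<Rightarrow> av" where
  "shiftA t (XV z p b) = XV (z + t) p b" | "shiftA t (YV y i w) = YV (y + t) i w"

lemma emb_shift: "emb m (shiftA t u) = emb m u + t" by (cases u) (auto simp: algebra_simps)
lemma valid_shift: "integer_vector t \<Longrightarrow> validV m (shiftA t u) = validV m u"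
  by (cases u) (auto intro: iv_add dest: iv_diff[of _ t])
lemma adj_shift: "integer_vector t \<Longrightarrow> adjA m (shiftA t u) (shiftA t v) = adjA m u v"
  by (cases u; cases v) (auto simp: xy_def algebra_simps intro: iv_add dest: iv_diff[of _ t])
lemma shift_inv: "shiftA (-t) (shiftA t u) = u" by (cases u) auto
lemma iv_neg: "integer_vector t \<Longrightarrow> integer_vector (-t)" unfolding integer_vector_def by auto

lemma VV_shift: assumes "integer_vector t" shows "x \<in> VV m \<longleftrightarrow> x + t \<in> VV m"
proof
  assume "x \<in> VV m"
  then obtain u where "validV m u" "x = emb m u" unfolding VV_def by auto
  then show "x + t \<in> VV m" unfolding VV_def using valid_shift[OF assms] emb_shift
    by (metis imageI mem_Collect_eq)
next
  assume "x + t \<in> VV m"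
  then obtain u where u: "validV m u" "x + t = emb m u" unfolding VV_def by auto
  have "x = (x + t) + (-t)" by simp
  also have "\<dots> = emb m (shiftA (-t) u)" using u(2) by (simp add: emb_shift)
  finally have "x = emb m (shiftA (-t) u)" .
  then show "x \<in> VV m" unfolding VV_def using valid_shift[OF iv_neg[OF assms]] u by auto
qed

lemma EE_shift: assumes "integer_vector t" shows "EE m x y \<longleftrightarrow> EE m (x + t) (y + t)"
proof
  assume "EE m x y"
  then obtain u v where "adjA m u v" "x = emb m u" "y = emb m v" unfolding EE_def by auto
  then show "EE m (x + t) (y + t)" unfolding EE_def using adj_shift[OF assms] emb_shift by metis
next
  assume "EE m (x + t) (y + t)"
  then obtain u v where uv: "adjA m u v" "x + t = emb m u" "y + t = emb m v" unfolding EE_def by auto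
  have "x = (x + t) + (-t)" "y = (y + t) + (-t)" by simp_all
  then have "x = emb m (shiftA (-t) u)" "y = emb m (shiftA (-t) v)"
    using uv by (simp_all add: emb_shift)
  then show "EE m x y" unfolding EE_def using adj_shift[OF iv_neg[OF assms]] uv(1) by metis
qed

lemma adj_irrefl: "adjA m u v \<Longrightarrow> u \<noteq> v" by (cases u; cases v) auto

lemma simple: "simple_graph (VV m) (EE m)"
  unfolding simple_graph_def
proof (intro allI impI conjI)
  fix x y assume e: "EE m x y"
  show "x \<in> VV m" "y \<in> VV m" using EE_VV[OF e] by auto
  show "EE m y x" using EE_sym[OF e] .
  obtain u v where uv: "adjA m u v" "x = emb m u" "y = emb m v" using e unfolding EE_def by auto
  show "x \<noteq> y" using uv adj_irrefl adj_valid emb_inj by metis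
qed

lemma bipartite: "bipartite_graph (VV m) (EE m)"
  unfolding bipartite_graph_def
proof (intro exI allI impI)
  fix x y assume e: "EE m x y"
  let ?A = "{emb m (XV z p b) | z p b. validV m (XV z p b)}"
  obtain u v where uv: "adjA m u v" "x = emb m u" "y = emb m v" using e unfolding EE_def by auto
  have vu: "validV m u" "validV m v" using adj_valid[OF uv(1)] by auto
  have memA: "\<And>w. validV m w \<Longrightarrow> emb m w \<in> ?A \<longleftrightarrow> (\<exists>z p b. w = XV z p b)"
  proof
    fix w assume "validV m w" "emb m w \<in> ?A"
    then obtain z p b where "validV m (XV z p b)" "emb m w = emb m (XV z p b)" by blast
    then show "\<exists>z p b. w = XV z p b" using emb_inj \<open>validV m w\<close> by metis
  qed (blast)
  show "x \<in> ?A \<longleftrightarrow> y \<notin> ?A"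
    using memA[OF vu(1)] memA[OF vu(2)] uv by (cases u; cases v) auto
qed

lemma infinite_VV: assumes "0 < m" shows "infinite (VV m)"
proof
  assume fin: "finite (VV m)"
  define f where "f k = emb m (XV (real k *\<^sub>R dir 0) (zeros m) False)" for k
  have iv: "integer_vector (real k *\<^sub>R dir 0)" for k
    unfolding integer_vector_def dir_def mk3_def by auto
  have v: "validV m (XV (real k *\<^sub>R dir 0) (zeros m) False)" for k using iv zeros_valid[OF assms] by simp
  have "inj f"
  proof
    fix a b assume "f a = f b"
    then have "XV (real a *\<^sub>R dir 0) (zeros m) False = XV (real b *\<^sub>R dir 0) (zeros m) False"
      unfolding f_def using emb_inj v by metis
    then have "real a *\<^sub>R dir 0 = real b *\<^sub>R dir 0" by simp
    then have "(real a *\<^sub>R dir 0) $ 1 = (real b *\<^sub>R dir 0) $ 1" by (rule arg_cong)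
    then show "a = b" by (simp add: dir_def)
  qed
  moreover have "range f \<subseteq> VV m" unfolding f_def VV_def using v by (auto intro!: imageI simp del: emb.simps)
  ultimately show False using fin by (meson finite_imageD finite_subset infinite_UNIV_nat)
qed


definition Ps :: "nat \<Rightarrow> nat list set" where "Ps m = {p. set p \<subseteq> {..<m} \<and> length p = 2*m}"
lemma Ps_finite: "finite (Ps m)" unfolding Ps_def by (rule finite_lists_length_eq) simp
lemma validP_Ps: "validP m p \<longleftrightarrow> p \<in> Ps m" unfolding validP_def Ps_def by auto

lemma finite_cube: "finite {v \<in> VV m. cube_of v = c}"
proof -
  define Zc :: "real^3" where "Zc = (\<chi> j. of_int (c$j))"
  let ?S = "(\<lambda>(p,b). XV Zc p b) ` (Ps m \<times> UNIV) \<union> (\<lambda>(i,w). YV Zc i w) ` ({..<2*m} \<times> Ps m)"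
  have fS: "finite ?S" using Ps_finite by auto
  have "{v \<in> VV m. cube_of v = c} \<subseteq> emb m ` ?S"
  proof
    fix v assume "v \<in> {v \<in> VV m. cube_of v = c}"
    then obtain u where u: "validV m u" "v = emb m u" "cube_of v = c" unfolding VV_def by auto
    have "\<And>j. cubeA u $ j = of_int (c$j)"
    proof -
      fix j
      have "\<lfloor>cubeA u $ j\<rfloor> = c $ j" using cube_emb[OF u(1), of j] u by simp
      moreover have "cubeA u $ j \<in> \<int>" using valid_iv[OF u(1)] iv_nth by blast
      ultimately show "cubeA u $ j = of_int (c$j)" by (auto elim!: Ints_cases)
    qed
    then have "cubeA u = Zc" unfolding Zc_def by (simp add: vec_eq_iff)
    then have "u \<in> ?S" using u(1) by (cases u) (auto simp: validP_Ps validL_def)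
    then show "v \<in> emb m ` ?S" using u by auto
  qed
  then show ?thesis using fS finite_subset by blast
qed

lemma floor_dir: "integer_vector z \<Longrightarrow> k < 3 \<Longrightarrow>
   \<exists>i. \<bar>\<lfloor>z$i\<rfloor> - \<lfloor>(z + dir k)$i\<rfloor>\<bar> = 1 \<and> (\<forall>j. j \<noteq> i \<longrightarrow> \<lfloor>z$j\<rfloor> = \<lfloor>(z + dir k)$j\<rfloor>)"
proof -
  assume "k < 3"
  then have "k = 0 \<or> k = 1 \<or> k = 2" by auto
  then show ?thesis
  proof (elim disjE)
    assume "k = 0" then show ?thesis
      by (intro exI[of _ 1]) (auto simp: dir_def forall_3)
  next
    assume "k = 1" then show ?thesis
      by (intro exI[of _ 2]) (auto simp: dir_def forall_3)
  next
    assume "k = 2" then show ?thesis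
      by (intro exI[of _ 3]) (auto simp: dir_def forall_3)
  qed
qed

lemma edge_cube: assumes "EE m x y"
  shows "cube_of x = cube_of y \<or> (\<exists>i. \<bar>cube_of x $ i - cube_of y $ i\<bar> = 1 \<and>
             (\<forall>j. j \<noteq> i \<longrightarrow> cube_of x $ j = cube_of y $ j))"
proof -
  have gen: "\<And>z p b y i w. xy m z p y i w \<Longrightarrow>
     cube_of (emb m (XV z p b)) = cube_of (emb m (YV y i w)) \<or> (\<exists>i'. \<bar>cube_of (emb m (XV z p b)) $ i' - cube_of (emb m (YV y i w)) $ i'\<bar> = 1 \<and>
             (\<forall>j. j \<noteq> i' \<longrightarrow> cube_of (emb m (XV z p b)) $ j = cube_of (emb m (YV y i w)) $ j))"
  proof -
    fix z p b y i w assume h: "xy m z p y i w"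
    have v: "validV m (XV z p b)" "validV m (YV y i w)" using adj_valid[of m "XV z p b" "YV y i w"] h by auto
    have c1: "cube_of (emb m (XV z p b)) $ j = \<lfloor>z$j\<rfloor>" for j using cube_emb[OF v(1)] by simp
    have c2: "cube_of (emb m (YV y i w)) $ j = \<lfloor>(z + delta m p i)$j\<rfloor>" for j using cube_emb[OF v(2)] h by (simp add: xy_def)
    show "?thesis z p b y i w"
    proof (cases "i < 3 \<and> p = zeros m")
      case True
      then show ?thesis using c1 c2 floor_dir[of z i] h by (simp add: delta_def xy_def)
    next
      case False
      then show ?thesis using c1 c2 by (auto simp: delta_def vec_eq_iff)
    qed
  qed
  obtain u v where uv: "adjA m u v" "x = emb m u" "y = emb m v" using assms unfolding EE_def by auto
  show ?thesis
  proof (cases u)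
    case (XV z p b)
    then obtain y' i w where "v = YV y' i w" "xy m z p y' i w" using adjX uv(1) by blast
    then show ?thesis using gen XV uv by blast
  next
    case (YV y' i w)
    then obtain z p b where "v = XV z p b" "xy m z p y' i w" using adjY uv(1) by blast
    then have "cube_of y = cube_of x \<or> (\<exists>i'. \<bar>cube_of y $ i' - cube_of x $ i'\<bar> = 1 \<and>
             (\<forall>j. j \<noteq> i' \<longrightarrow> cube_of y $ j = cube_of x $ j))" using gen YV uv by blast
    then show ?thesis by (metis abs_minus_commute)
  qed
qed

lemma rep_upd0: "(replicate n (0::nat))[i:=0] = replicate n 0"
  by (cases "i < n") (auto simp: list_eq_iff_nth_eq nth_list_update)

lemma edge_form: assumes "EE m a b"
  shows "\<exists>z s k t. integer_vector z \<and> 0 < s \<and> s \<le> 1/4 \<and> 0 < t \<and> t \<le> 5/16 \<and>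
     (k = 0 \<or> (\<exists>i<3. k = dir i \<and> t = tau i)) \<and>
     ((a = z + PX s \<and> b = z + k + PY t) \<or> (b = z + PX s \<and> a = z + k + PY t))"
proof -
  have gen: "\<And>z p bb y i w. xy m z p y i w \<Longrightarrow> \<exists>k. (k = 0 \<or> (\<exists>i'<3. k = dir i' \<and> tY m i w = tau i'))
      \<and> emb m (YV y i w) = z + k + PY (tY m i w)"
  proof -
    fix z p bb y i w assume h: "xy m z p y i w"
    show "?thesis z p bb y i w"
    proof (cases "i < 3 \<and> p = zeros m")
      case True
      then have "w = zeros m" using onl_w[of m p i w] h unfolding xy_def zeros_def by (simp add: rep_upd0)
      then show ?thesis using True h by (intro exI[of _ "dir i"]) (auto simp: xy_def delta_def tY_def zeros_def rep_upd0)
    next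
      case False
      then show ?thesis using h by (intro exI[of _ 0]) (auto simp: xy_def delta_def)
    qed
  qed
  obtain u v where uv: "adjA m u v" "a = emb m u" "b = emb m v" using assms unfolding EE_def by auto
  show ?thesis
  proof (cases u)
    case (XV z p bb)
    then obtain y i w where yv: "v = YV y i w" "xy m z p y i w" using adjX uv(1) by blast
    obtain k where "(k = 0 \<or> (\<exists>i'<3. k = dir i' \<and> tY m i w = tau i'))" "emb m (YV y i w) = z + k + PY (tY m i w)"
      using gen[OF yv(2)] by blast
    then show ?thesis using XV uv yv sX_bounds[of p bb] tY_bounds[of m i w]
      by (intro exI[of _ z] exI[of _ "sX p bb"] exI[of _ k] exI[of _ "tY m i w"] conjI) (auto simp: xy_def)
  next
    case (YV y i w)
    then obtain z p bb where yv: "v = XV z p bb" "xy m z p y i w" using adjY uv(1) by blast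
    obtain k where "(k = 0 \<or> (\<exists>i'<3. k = dir i' \<and> tY m i w = tau i'))" "emb m (YV y i w) = z + k + PY (tY m i w)"
      using gen[OF yv(2)] by blast
    then show ?thesis using YV uv yv sX_bounds[of p bb] tY_bounds[of m i w]
      by (intro exI[of _ z] exI[of _ "sX p bb"] exI[of _ k] exI[of _ "tY m i w"] conjI) (auto simp: xy_def)
  qed
qed

lemma segments: assumes "EE m a b" "EE m c d" "{a, b} \<noteq> {c, d}"
  shows "closed_segment a b \<inter> closed_segment c d \<subseteq> {a, b} \<inter> {c, d}"
proof
  fix P assume P: "P \<in> closed_segment a b \<inter> closed_segment c d"
  obtain z1 s1 k1 t1 where e1: "integer_vector z1" "0 < s1" "s1 \<le> 1/4" "0 < t1" "t1 \<le> 5/16"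
     "k1 = 0 \<or> (\<exists>i<3. k1 = dir i \<and> t1 = tau i)"
     "{a, b} = {z1 + PX s1, z1 + k1 + PY t1}"
    using edge_form[OF assms(1)] by blast
  obtain z2 s2 k2 t2 where e2: "integer_vector z2" "0 < s2" "s2 \<le> 1/4" "0 < t2" "t2 \<le> 5/16"
     "k2 = 0 \<or> (\<exists>i<3. k2 = dir i \<and> t2 = tau i)"
     "{c, d} = {z2 + PX s2, z2 + k2 + PY t2}"
    using edge_form[OF assms(2)] by blast
  have s1: "closed_segment a b = closed_segment (z1 + PX s1) (z1 + k1 + PY t1)"
    using e1(7) by (metis closed_segment_commute doubleton_eq_iff)
  have s2: "closed_segment c d = closed_segment (z2 + PX s2) (z2 + k2 + PY t2)"
    using e2(7) by (metis closed_segment_commute doubleton_eq_iff)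
  have "(P = z1 + PX s1 \<and> P = z2 + PX s2) \<or> (P = z1 + k1 + PY t1 \<and> P = z2 + k2 + PY t2)
      \<or> (z1 + PX s1 = z2 + PX s2 \<and> z1 + k1 + PY t1 = z2 + k2 + PY t2)"
    by (rule seg_inter[OF e1(1) e2(1) e1(2,3) e2(2,3) e1(4,5) e2(4,5) e1(6) e2(6)])
      (use P s1 s2 in auto)
  then show "P \<in> {a, b} \<inter> {c, d}" using e1(7) e2(7) assms(3) by auto
qed


abbreviation RA :: "nat \<Rightarrow> av \<Rightarrow> av \<Rightarrow> bool" where "RA m \<equiv> (adjA m)\<^sup>*\<^sup>*"

lemma RA_sym: "RA m u v \<Longrightarrow> RA m v u"
proof (induction rule: rtranclp_induct)
  case base then show ?case by simp
next
  case (step y z)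
  then show ?case using adj_sym by (metis converse_rtranclp_into_rtranclp)
qed

lemma step_line:
  assumes "validP m p" "i < 2*m" "c < m" "delta m p i = delta m (p[i:=c]) i" "integer_vector z" "0 < m"
  shows "RA m (XV z p b) (XV z (p[i:=c]) b')"
proof -
  have l: "validL m i (p[i:=0]) \<and> onl p i (p[i:=0])" using line_thru assms by blast
  have a1: "adjA m (XV z p b) (YV (z + delta m p i) i (p[i:=0]))" using l assms by (simp add: xy_def)
  have "onl (p[i:=c]) i (p[i:=0])" unfolding onl_def by (auto simp: nth_list_update)
  then have a2: "adjA m (YV (z + delta m p i) i (p[i:=0])) (XV z (p[i:=c]) b')"
    using l assms validP_upd by (simp add: xy_def)
  show ?thesis using a1 a2 by (meson r_into_rtranclp rtranclp_trans)
qed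

definition zk :: "nat \<Rightarrow> nat list \<Rightarrow> nat list" where
  "zk k q = map (\<lambda>j. if j < k \<and> j \<noteq> 3 then 0 else q!j) [0..<length q]"

lemma zk_len[simp]: "length (zk k q) = length q" by (simp add: zk_def)
lemma zk_nth: "j < length q \<Longrightarrow> zk k q ! j = (if j < k \<and> j \<noteq> 3 then 0 else q!j)" by (simp add: zk_def)
lemma zk_0: "zk 0 q = q" by (rule nth_equalityI) (auto simp: zk_nth)
lemma zk_Suc: "k < length q \<Longrightarrow> k \<noteq> 3 \<Longrightarrow> zk (Suc k) q = (zk k q)[k := 0]"
  by (rule nth_equalityI) (auto simp: zk_nth nth_list_update)
lemma zk_Suc3: "zk (Suc 3) q = zk 3 q"
  by (rule nth_equalityI) (auto simp: zk_nth)
lemma zk_valid: assumes "validP m q" shows "validP m (zk k q)"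
proof -
  have "\<And>x. x \<in> set (zk k q) \<Longrightarrow> x < m"
  proof -
    fix x assume "x \<in> set (zk k q)"
    then obtain j where j: "j < length q" "x = (if j < k \<and> j \<noteq> 3 then 0 else q!j)"
      unfolding zk_def by auto
    have "q!j < m" using assms j(1) nth_mem unfolding validP_def by blast
    then show "x < m" using j(2) by (auto split: if_splits)
  qed
  then show ?thesis using assms unfolding validP_def by simp
qed

lemma zk_path:
  assumes "validP m q" "q!3 = 1" "integer_vector z" "1 < m" "k \<le> 2*m"
  shows "RA m (XV z q False) (XV z (zk k q) False)"
  using assms(5)
proof (induction k)
  case 0 then show ?case by (simp add: zk_0)
next
  case (Suc k)
  have len: "length q = 2*m" using assms(1) validP_len by blast
  have three: "3 < length q" using assms(4) len by simp
  show ?case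
  proof (cases "k = 3")
    case True then show ?thesis using Suc zk_Suc3 by simp
  next
    case False
    have k: "k < length q" using Suc.prems len by simp
    have nz: "\<And>r. length r = length q \<Longrightarrow> r!3 = 1 \<Longrightarrow> r \<noteq> zeros m"
      using three len by (auto simp: zeros_def)
    have r3: "zk k q ! 3 = 1" using zk_nth[OF three] assms(2) by simp
    have r3': "(zk k q)[k:=0] ! 3 = 1" using r3 False by simp
    have "delta m (zk k q) k = delta m ((zk k q)[k:=0]) k"
      using nz[of "zk k q"] nz[of "(zk k q)[k:=0]"] r3 r3' by (simp add: delta_def)
    then have "RA m (XV z (zk k q) False) (XV z ((zk k q)[k:=0]) False)"
      using step_line[of m "zk k q" k 0 z] zk_valid[OF assms(1)] k len assms by simp
    moreover have "RA m (XV z q False) (XV z (zk k q) False)" using Suc by simp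
    ultimately show ?thesis using zk_Suc[OF k False] by (metis rtranclp_trans)
  qed
qed

lemma within_cube:
  assumes "validP m p" "integer_vector z" "1 < m"
  shows "RA m (XV z p b) (XV z (zeros m) False)"
proof -
  have len: "length p = 2*m" using assms(1) validP_len by blast
  have three: "3 < 2*m" using assms(3) by simp
  define q where "q = p[3:=1]"
  have s1: "RA m (XV z p b) (XV z q False)"
    unfolding q_def by (rule step_line) (use assms three in \<open>auto simp: delta_def\<close>)
  have q: "validP m q" "q!3 = 1" using validP_upd assms len three unfolding q_def by auto
  have s2: "RA m (XV z q False) (XV z (zk (2*m) q) False)" using zk_path q assms by simp
  have e: "zk (2*m) q = (zeros m)[3:=1]"
    using q len three by (intro nth_equalityI) (auto simp: zk_nth zeros_def q_def nth_list_update)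
  have s3: "RA m (XV z ((zeros m)[3:=1]) False) (XV z (((zeros m)[3:=1])[3:=0]) False)"
    by (rule step_line) (use assms three zeros_valid validP_upd in \<open>auto simp: delta_def zeros_def\<close>)
  have "((zeros m)[3:=1])[3:=0] = zeros m" by (simp add: zeros_def rep_upd0)
  then show ?thesis using s1 s2 s3 e by (metis rtranclp_trans)
qed

lemma cube_step:
  assumes "integer_vector z" "k < 3" "1 < m"
  shows "RA m (XV z (zeros m) False) (XV (z + dir k) (zeros m) False)"
proof -
  have v: "validP m (zeros m)" using zeros_valid assms by simp
  have k: "k < 2*m" using assms by simp
  have a1: "adjA m (XV z (zeros m) False) (YV (z + dir k) k (zeros m))"
    using line_thru[OF v k] assms v by (simp add: xy_def delta_def zeros_def rep_upd0)
  define q where "q = (zeros m)[k:=1]"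
  have qv: "validP m q" using validP_upd v assms unfolding q_def by simp
  have qn: "q \<noteq> zeros m" using k unfolding q_def zeros_def by (metis nth_list_update_eq nth_replicate one_neq_zero length_replicate)
  have "onl q k (zeros m)" unfolding q_def onl_def by (auto simp: nth_list_update)
  then have a2: "adjA m (YV (z + dir k) k (zeros m)) (XV (z + dir k) q False)"
    using qv qn line_thru[OF v k] assms iv_add iv_dir by (simp add: xy_def delta_def zeros_def rep_upd0)
  have "RA m (XV (z + dir k) q False) (XV (z + dir k) (zeros m) False)"
    using within_cube qv assms iv_add iv_dir by blast
  then show ?thesis using a1 a2 by (meson converse_rtranclp_into_rtranclp)
qed

lemma cube_line:
  assumes "integer_vector z" "k < 3" "1 < m"
  shows "RA m (XV z (zeros m) False) (XV (z + of_int a *\<^sub>R dir k) (zeros m) False)"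
proof (induction a rule: int_induct[where k=0])
  case base then show ?case by simp
next
  case (step1 i)
  have iv: "integer_vector (z + of_int i *\<^sub>R dir k)"
    using assms iv_dir unfolding integer_vector_def by auto
  have "z + of_int (i+1) *\<^sub>R dir k = (z + of_int i *\<^sub>R dir k) + dir k" by (simp add: algebra_simps)
  then show ?case using step1 cube_step[OF iv assms(2,3)] by (metis rtranclp_trans)
next
  case (step2 i)
  have iv: "integer_vector (z + of_int (i - 1) *\<^sub>R dir k)"
    using assms iv_dir unfolding integer_vector_def by auto
  have "z + of_int i *\<^sub>R dir k = (z + of_int (i - 1) *\<^sub>R dir k) + dir k" by (simp add: algebra_simps)
  then show ?case using step2 RA_sym[OF cube_step[OF iv assms(2,3)]] by (metis rtranclp_trans)
qed

lemma to_origin: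
  assumes "integer_vector z" "1 < m"
  shows "RA m (XV z (zeros m) False) (XV 0 (zeros m) False)"
proof -
  obtain a1 a2 a3 where a: "z$1 = of_int a1" "z$2 = of_int a2" "z$3 = of_int a3"
    using assms(1) unfolding integer_vector_def by (meson Ints_cases)
  have ivs: "integer_vector (of_int a *\<^sub>R dir k)" for a k
    using iv_dir unfolding integer_vector_def by auto
  have z: "z = ((0 + of_int a1 *\<^sub>R dir 0) + of_int a2 *\<^sub>R dir 1) + of_int a3 *\<^sub>R dir 2"
    using a by (simp add: vec3_eq dir_def)
  have iv0: "integer_vector (0::real^3)" by (simp add: integer_vector_def)
  have r1: "RA m (XV 0 (zeros m) False) (XV (0 + of_int a1 *\<^sub>R dir 0) (zeros m) False)"
    using cube_line[OF iv0 _ assms(2)] by simp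
  have r2: "RA m (XV (0 + of_int a1 *\<^sub>R dir 0) (zeros m) False) (XV ((0 + of_int a1 *\<^sub>R dir 0) + of_int a2 *\<^sub>R dir 1) (zeros m) False)"
    using cube_line[OF iv_add[OF iv0 ivs] _ assms(2)] by simp
  have r3': "RA m (XV ((0 + of_int a1 *\<^sub>R dir 0) + of_int a2 *\<^sub>R dir 1) (zeros m) False)
     (XV (((0 + of_int a1 *\<^sub>R dir 0) + of_int a2 *\<^sub>R dir 1) + of_int a3 *\<^sub>R dir 2) (zeros m) False)"
    by (rule cube_line[OF iv_add[OF iv_add[OF iv0 ivs] ivs] _ assms(2)]) simp
  have r3: "RA m (XV ((0 + of_int a1 *\<^sub>R dir 0) + of_int a2 *\<^sub>R dir 1) (zeros m) False) (XV z (zeros m) False)"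
    using r3' by (simp only: z)
  show ?thesis using r1 r2 r3 RA_sym by (meson rtranclp_trans)
qed

lemma all_to_origin:
  assumes "validV m u" "1 < m"
  shows "RA m u (XV 0 (zeros m) False)"
proof (cases u)
  case (XV z p b)
  then have v: "validP m p" "integer_vector z" using assms by auto
  have "RA m (XV z p b) (XV z (zeros m) False)" using within_cube[OF v(1,2) assms(2)] .
  moreover have "RA m (XV z (zeros m) False) (XV 0 (zeros m) False)" using to_origin[OF v(2) assms(2)] .
  ultimately show ?thesis using XV by (rule_tac rtranclp_trans) simp_all
next
  case (YV y i w)
  have a: "adjA m u (XV (y - delta m w i) w False)"
    using assms YV by (simp add: xy_def onl_def iv_diff iv_delta validL_def)
  then have v: "validP m w" "integer_vector (y - delta m w i)" using adj_valid[OF a] by auto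
  have "RA m (XV (y - delta m w i) w False) (XV (y - delta m w i) (zeros m) False)"
    using within_cube[OF v assms(2)] .
  moreover have "RA m (XV (y - delta m w i) (zeros m) False) (XV 0 (zeros m) False)"
    using to_origin[OF v(2) assms(2)] .
  ultimately have "RA m (XV (y - delta m w i) w False) (XV 0 (zeros m) False)" by (rule rtranclp_trans)
  then show ?thesis by (rule converse_rtranclp_into_rtranclp[where r="adjA m", OF a])
qed

lemma RA_EE: "RA m u v \<Longrightarrow> (EE m)\<^sup>*\<^sup>* (emb m u) (emb m v)"
proof (induction rule: rtranclp_induct)
  case base then show ?case by simp
next
  case (step y z)
  then have "EE m (emb m y) (emb m z)" unfolding EE_def by blast
  then show ?case using step by (meson rtranclp.rtrancl_into_rtrancl)
qed

lemma connected: assumes "1 < m" shows "connected_graph (VV m) (EE m)"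
  unfolding connected_graph_def
proof (intro ballI)
  fix x y assume "x \<in> VV m" "y \<in> VV m"
  then obtain u v where u: "validV m u" "x = emb m u" and v: "validV m v" "y = emb m v"
    unfolding VV_def by auto
  have "RA m u v" using all_to_origin[OF u(1) assms] RA_sym[OF all_to_origin[OF v(1) assms]]
    by (meson rtranclp_trans)
  then show "(EE m)\<^sup>*\<^sup>* x y" using RA_EE u v by simp
qed


lemma set4: "{f i | i. i < (4::nat)} = {f 0, f 1, f 2, f 3}"
proof -
  have "{f i | i. i < (4::nat)} = f ` {..<4}" by auto
  also have "{..<(4::nat)} = {0,1,2,3}" by auto
  finally show ?thesis by simp
qed

lemma forall4: "(\<forall>i<(4::nat). P i) \<longleftrightarrow> P 0 \<and> P 1 \<and> P 2 \<and> P 3"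
proof -
  have "{..<(4::nat)} = {0,1,2,3}" by auto
  then show ?thesis by (metis (no_types, lifting) empty_iff insert_iff lessThan_iff)
qed

lemma forall6: "(\<forall>i<(6::nat). P i) \<longleftrightarrow> P 0 \<and> P 1 \<and> P 2 \<and> P 3 \<and> P 4 \<and> P 5"
proof -
  have "{..<(6::nat)} = {0,1,2,3,4,5}" by auto
  then show ?thesis by (metis (no_types, lifting) empty_iff insert_iff lessThan_iff)
qed

lemma md4: "((0::nat)+1) mod 4 = 1" "((1::nat)+1) mod 4 = 2" "((2::nat)+1) mod 4 = 3" "((3::nat)+1) mod 4 = 0"
  by simp_all
lemma md6: "((0::nat)+1) mod 6 = 1" "((1::nat)+1) mod 6 = 2" "((2::nat)+1) mod 6 = 3" "((3::nat)+1) mod 6 = 4"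
   "((4::nat)+1) mod 6 = 5" "((5::nat)+1) mod 6 = 0"
  by simp_all

lemma c4_explicit: "H \<in> cycle_subgraphs E 4 \<longleftrightarrow> (\<exists>x::nat \<Rightarrow> 'a. inj_on x {..<4} \<and> E (x 0) (x 1) \<and> E (x 1) (x 2) \<and> E (x 2) (x 3) \<and> E (x 3) (x 0)
   \<and> H = {{x 0, x 1}, {x 1, x 2}, {x 2, x 3}, {x 3, x 0}})"
proof -
  have s: "{{x i, x ((i + 1) mod 4)} | i. i < (4::nat)} = {{x 0, x 1}, {x 1, x 2}, {x 2, x 3}, {x 3, x 0}}" for x :: "nat \<Rightarrow> 'a"
    using set4[of "\<lambda>i. {x i, x ((i + 1) mod 4)}"] by (simp only: md4)
  have e: "(\<forall>i<(4::nat). E (x i) (x ((i + 1) mod 4))) \<longleftrightarrow> E (x 0) (x 1) \<and> E (x 1) (x 2) \<and> E (x 2) (x 3) \<and> E (x 3) (x 0)" for x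
    unfolding forall4 by (simp only: md4)
  show ?thesis unfolding cycle_subgraphs_def mem_Collect_eq s e by blast
qed

lemma c6_explicit: "H \<in> cycle_subgraphs E 6 \<Longrightarrow> (\<exists>x::nat \<Rightarrow> 'a. inj_on x {..<6} \<and> E (x 0) (x 1) \<and> E (x 1) (x 2) \<and> E (x 2) (x 3) \<and> E (x 3) (x 4)
   \<and> E (x 4) (x 5) \<and> E (x 5) (x 0))"
proof -
  have e: "(\<forall>i<(6::nat). E (x i) (x ((i + 1) mod 6))) \<longleftrightarrow> E (x 0) (x 1) \<and> E (x 1) (x 2) \<and> E (x 2) (x 3) \<and> E (x 3) (x 4)
   \<and> E (x 4) (x 5) \<and> E (x 5) (x 0)" for x
    unfolding forall6 by (simp only: md6)
  assume "H \<in> cycle_subgraphs E 6"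
  then show ?thesis unfolding cycle_subgraphs_def mem_Collect_eq e by blast
qed

lemma dc:
  assumes "finite A" "finite B" "\<And>a. a \<in> A \<Longrightarrow> k \<le> card {b\<in>B. R a b}"
    "\<And>b. b \<in> B \<Longrightarrow> card {a\<in>A. R a b} \<le> 3"
  shows "k * card A \<le> 3 * card B"
proof -
  have "k * card A = (\<Sum>a\<in>A. k)" by simp
  also have "\<dots> \<le> (\<Sum>a\<in>A. card {b\<in>B. R a b})" using assms(3) by (rule sum_mono)
  also have "\<dots> = (\<Sum>a\<in>A. \<Sum>b\<in>B. if R a b then 1 else 0)"
    using assms(2) by (simp add: sum.inter_filter[symmetric])
  also have "\<dots> = (\<Sum>b\<in>B. \<Sum>a\<in>A. if R a b then 1 else 0)" by (rule sum.swap)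
  also have "\<dots> = (\<Sum>b\<in>B. card {a\<in>A. R a b})"
    using assms(1) by (simp add: sum.inter_filter[symmetric])
  also have "\<dots> \<le> (\<Sum>b\<in>B. 3)" using assms(4) by (rule sum_mono)
  also have "\<dots> = 3 * card B" by simp
  finally show ?thesis .
qed

definition Q4 :: "'a \<Rightarrow> 'a \<Rightarrow> 'a \<Rightarrow> 'a \<Rightarrow> 'a set set" where
  "Q4 u w p q = {{u,p},{p,w},{u,q},{q,w}}"

lemma Q4_sym: "Q4 u w p q = Q4 u w q p" unfolding Q4_def by (simp add: insert_commute)

lemma swap4: "{A, B, C, D} = {A, B, D, C}" by blast

lemma theta_c4:
  fixes x :: "nat \<Rightarrow> 'a"
  assumes d: "distinct [u, w, a, b, c]" and x: "inj_on x {..<4}"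
    and sub: "{{x 0, x 1}, {x 1, x 2}, {x 2, x 3}, {x 3, x 0}} \<subseteq> {{u, a}, {a, w}, {u, b}, {b, w}, {u, c}, {c, w}}"
  shows "{{x 0, x 1}, {x 1, x 2}, {x 2, x 3}, {x 3, x 0}} \<in> {Q4 u w a b, Q4 u w a c, Q4 u w b c}"
proof -
  let ?T = "{{u, a}, {a, w}, {u, b}, {b, w}, {u, c}, {c, w}}"
  have edge: "\<And>p q. {p, q} \<in> ?T \<Longrightarrow> (p \<in> {u,w} \<and> q \<in> {a,b,c}) \<or> (q \<in> {u,w} \<and> p \<in> {a,b,c})"
    by (auto simp: doubleton_eq_iff)
  have disj: "\<And>p. p \<in> {u,w} \<Longrightarrow> p \<notin> {a,b,c}" using d by auto
  have xd: "x 0 \<noteq> x 1" "x 0 \<noteq> x 2" "x 0 \<noteq> x 3" "x 1 \<noteq> x 2" "x 1 \<noteq> x 3" "x 2 \<noteq> x 3"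
    using inj_onD[OF x, of 0 1] inj_onD[OF x, of 0 2] inj_onD[OF x, of 0 3] inj_onD[OF x, of 1 2]
      inj_onD[OF x, of 1 3] inj_onD[OF x, of 2 3] by auto
  have e: "{x 0, x 1} \<in> ?T" "{x 1, x 2} \<in> ?T" "{x 2, x 3} \<in> ?T" "{x 3, x 0} \<in> ?T" using sub by auto
  have Qs: "\<And>p q. p \<in> {a,b,c} \<Longrightarrow> q \<in> {a,b,c} \<Longrightarrow> p \<noteq> q \<Longrightarrow> Q4 u w p q \<in> {Q4 u w a b, Q4 u w a c, Q4 u w b c}"
  proof -
    fix p q assume pq: "p \<in> {a,b,c}" "q \<in> {a,b,c}" "p \<noteq> q"
    have "(p = a \<and> q = b) \<or> (p = b \<and> q = a) \<or> (p = a \<and> q = c) \<or> (p = c \<and> q = a) \<or> (p = b \<and> q = c) \<or> (p = c \<and> q = b)"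
      using pq by blast
    then show "Q4 u w p q \<in> {Q4 u w a b, Q4 u w a c, Q4 u w b c}"
      using Q4_sym[of u w a b] Q4_sym[of u w a c] Q4_sym[of u w b c] by (elim disjE conjE) simp_all
  qed
  have ins: "\<And>p q. {p, q} = {q, p}" by blast
  show ?thesis
  proof (cases "x 0 \<in> {u,w}")
    case True
    have s: "x 1 \<in> {a,b,c}" "x 2 \<in> {u,w}" "x 3 \<in> {a,b,c}"
      using edge[OF e(1)] edge[OF e(2)] edge[OF e(3)] True disj by blast+
    have "(x 0 = u \<and> x 2 = w) \<or> (x 0 = w \<and> x 2 = u)" using True s(2) xd by auto
    then have "{{x 0, x 1}, {x 1, x 2}, {x 2, x 3}, {x 3, x 0}} = Q4 u w (x 1) (x 3)"
    proof
      assume h: "x 0 = u \<and> x 2 = w"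
      show ?thesis unfolding Q4_def h[THEN conjunct1] h[THEN conjunct2] by (simp add: insert_commute)
    next
      assume h: "x 0 = w \<and> x 2 = u"
      show ?thesis unfolding Q4_def h[THEN conjunct1] h[THEN conjunct2] by (simp add: insert_commute)
    qed
    then show ?thesis using Qs s xd by simp
  next
    case False
    have s: "x 0 \<in> {a,b,c}" "x 1 \<in> {u,w}" "x 2 \<in> {a,b,c}" "x 3 \<in> {u,w}"
      using edge[OF e(1)] edge[OF e(2)] edge[OF e(3)] False disj by blast+
    have "(x 1 = u \<and> x 3 = w) \<or> (x 1 = w \<and> x 3 = u)" using s xd by auto
    then have "{{x 0, x 1}, {x 1, x 2}, {x 2, x 3}, {x 3, x 0}} = Q4 u w (x 0) (x 2)"
    proof
      assume h: "x 1 = u \<and> x 3 = w"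
      show ?thesis unfolding Q4_def h[THEN conjunct1] h[THEN conjunct2] by (simp add: insert_commute)
    next
      assume h: "x 1 = w \<and> x 3 = u"
      show ?thesis unfolding Q4_def h[THEN conjunct1] h[THEN conjunct2] by (simp add: insert_commute)
    qed
    then show ?thesis using Qs s xd by simp
  qed
qed

lemma card_le_3: "card {A, B, C} \<le> 3"
  using card_length[of "[A, B, C]"] by simp

lemma theta_c4_card:
  assumes "T \<in> theta222_subgraphs E"
  shows "finite {C \<in> cycle_subgraphs E 4. C \<subseteq> T} \<and> card {C \<in> cycle_subgraphs E 4. C \<subseteq> T} \<le> 3"
proof -
  obtain u w a b c where T: "T = {{u, a}, {a, w}, {u, b}, {b, w}, {u, c}, {c, w}}" "distinct [u, w, a, b, c]"
    using assms unfolding theta222_subgraphs_def mem_Collect_eq by blast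
  have "{C \<in> cycle_subgraphs E 4. C \<subseteq> T} \<subseteq> {Q4 u w a b, Q4 u w a c, Q4 u w b c}"
  proof
    fix C assume Cm: "C \<in> {C \<in> cycle_subgraphs E 4. C \<subseteq> T}"
    then have "C \<in> cycle_subgraphs E 4" "C \<subseteq> T" by auto
    then obtain x :: "nat \<Rightarrow> 'a" where x: "inj_on x {..<4}" "C = {{x 0, x 1}, {x 1, x 2}, {x 2, x 3}, {x 3, x 0}}"
      unfolding c4_explicit by blast
    have "{{x 0, x 1}, {x 1, x 2}, {x 2, x 3}, {x 3, x 0}} \<subseteq> {{u, a}, {a, w}, {u, b}, {b, w}, {u, c}, {c, w}}"
      using \<open>C \<subseteq> T\<close> x(2) T(1) by simp
    from theta_c4[OF T(2) x(1) this] show "C \<in> {Q4 u w a b, Q4 u w a c, Q4 u w b c}" using x(2) by simp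
  qed
  then have "card {C \<in> cycle_subgraphs E 4. C \<subseteq> T} \<le> card {Q4 u w a b, Q4 u w a c, Q4 u w b c}"
    by (rule card_mono[rotated]) simp
  also have "\<dots> \<le> 3" by (rule card_le_3)
  finally show ?thesis using \<open>{C \<in> cycle_subgraphs E 4. C \<subseteq> T} \<subseteq> _\<close> finite_subset by blast
qed


definition ball2 :: "('a \<Rightarrow> 'a \<Rightarrow> bool) \<Rightarrow> 'a \<Rightarrow> 'a set" where
  "ball2 E v = {v} \<union> {y. E v y} \<union> (\<Union>z\<in>{y. E v y}. {y. E z y})"

lemma b2_0: "v \<in> ball2 E v" unfolding ball2_def by simp
lemma b2_1: "E v y \<Longrightarrow> y \<in> ball2 E v" unfolding ball2_def by simp
lemma b2_2: "E v z \<Longrightarrow> E z y \<Longrightarrow> y \<in> ball2 E v" unfolding ball2_def by blast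

lemma ball2_fin: "(\<And>x. finite {y. E x y}) \<Longrightarrow> finite (ball2 E v)"
  unfolding ball2_def by auto

lemma c4set_fin:
  assumes sym: "\<And>x y. E x y \<Longrightarrow> E y x" and fin: "\<And>x. finite {y. E x y}"
  shows "finite {H \<in> cycle_subgraphs E 4. v \<in> \<Union>H}"
proof (rule finite_subset[of _ "Pow (Pow (ball2 E v))"])
  show "finite (Pow (Pow (ball2 E v)))" using ball2_fin[OF fin] by simp
  show "{H \<in> cycle_subgraphs E 4. v \<in> \<Union>H} \<subseteq> Pow (Pow (ball2 E v))"
  proof
    fix H assume "H \<in> {H \<in> cycle_subgraphs E 4. v \<in> \<Union>H}"
    then have h: "H \<in> cycle_subgraphs E 4" "v \<in> \<Union>H" by auto
    then obtain x :: "nat \<Rightarrow> 'a" where x: "E (x 0) (x 1)" "E (x 1) (x 2)" "E (x 2) (x 3)" "E (x 3) (x 0)"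
      "H = {{x 0, x 1}, {x 1, x 2}, {x 2, x 3}, {x 3, x 0}}"
      unfolding c4_explicit by blast
    have v: "v = x 0 \<or> v = x 1 \<or> v = x 2 \<or> v = x 3" using x(5) h(2) by simp blast
    have "x 0 \<in> ball2 E v \<and> x 1 \<in> ball2 E v \<and> x 2 \<in> ball2 E v \<and> x 3 \<in> ball2 E v"
      using v x(1-4) sym b2_0 b2_1 b2_2 by metis
    then show "H \<in> Pow (Pow (ball2 E v))" using x(5) by simp
  qed
qed

lemma thset_fin:
  assumes sym: "\<And>x y. E x y \<Longrightarrow> E y x" and fin: "\<And>x. finite {y. E x y}"
  shows "finite {H \<in> theta222_subgraphs E. v \<in> \<Union>H}"
proof (rule finite_subset[of _ "Pow (Pow (ball2 E v))"])
  show "finite (Pow (Pow (ball2 E v)))" using ball2_fin[OF fin] by simp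
  show "{H \<in> theta222_subgraphs E. v \<in> \<Union>H} \<subseteq> Pow (Pow (ball2 E v))"
  proof
    fix H assume "H \<in> {H \<in> theta222_subgraphs E. v \<in> \<Union>H}"
    then have h: "H \<in> theta222_subgraphs E" "v \<in> \<Union>H" by auto
    then obtain u w a b c where x: "H = {{u, a}, {a, w}, {u, b}, {b, w}, {u, c}, {c, w}}"
      "E u a" "E a w" "E u b" "E b w" "E u c" "E c w"
      unfolding theta222_subgraphs_def mem_Collect_eq by blast
    have v: "v = u \<or> v = w \<or> v = a \<or> v = b \<or> v = c" using x(1) h(2) by simp blast
    have "u \<in> ball2 E v \<and> w \<in> ball2 E v \<and> a \<in> ball2 E v \<and> b \<in> ball2 E v \<and> c \<in> ball2 E v"
      using v x(2-7) sym b2_0 b2_1 b2_2 by metis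
    then show "H \<in> Pow (Pow (ball2 E v))" using x(1) by simp
  qed
qed


lemma extend_count:
  assumes sym: "\<And>x y. E x y \<Longrightarrow> E y x" and irr: "\<And>x. \<not> E x x"
    and fin: "\<And>x. finite {y. E x y}"
    and C: "C = {{a,b},{b,c},{c,d},{d,a}}" "distinct [a,b,c,d]" "E a b" "E b c" "E c d" "E d a"
    and tw: "{y. E a y} = {y. E c y}" and v: "v \<in> \<Union>C"
  shows "card {y. E a y} - 2 \<le> card {T \<in> {H \<in> theta222_subgraphs E. v \<in> \<Union>H}. C \<subseteq> T}"
proof -
  define f where "f y = {{a,b},{b,c},{a,d},{d,c},{a,y},{y,c}}" for y
  let ?N = "{y. E a y} - {b, d}"
  have fth: "f y \<in> {T \<in> {H \<in> theta222_subgraphs E. v \<in> \<Union>H}. C \<subseteq> T}" if y: "y \<in> ?N" for y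
  proof -
    have ya: "E a y" using y by auto
    have yc: "E c y" using ya tw by auto
    have d: "distinct [a, c, b, d, y]" using C(2) y irr ya yc by auto
    have "f y \<in> theta222_subgraphs E"
      unfolding theta222_subgraphs_def f_def mem_Collect_eq
      apply (rule exI[of _ a], rule exI[of _ c], rule exI[of _ b], rule exI[of _ d], rule exI[of _ y])
      using d C(3-6) ya yc sym by simp
    moreover have "C \<subseteq> f y" unfolding C(1) f_def by (auto simp: insert_commute)
    moreover have "v \<in> \<Union>(f y)" using v \<open>C \<subseteq> f y\<close> by blast
    ultimately show ?thesis by blast
  qed
  have inj: "inj_on f ?N"
  proof
    fix y y' assume yy: "y \<in> ?N" "y' \<in> ?N" "f y = f y'"
    have "y \<in> \<Union>(f y)" unfolding f_def by simp
    then have "y \<in> \<Union>(f y')" using yy(3) by simp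
    then have "y \<in> {a,b,c,d,y'}" unfolding f_def by simp blast
    moreover have "y \<noteq> a" "y \<noteq> c" using yy(1) irr tw by auto
    ultimately show "y = y'" using yy(1) by auto
  qed
  have finT: "finite {T \<in> {H \<in> theta222_subgraphs E. v \<in> \<Union>H}. C \<subseteq> T}"
    by (rule finite_subset[OF _ thset_fin[where E=E and v=v, OF sym fin]]) auto
  have eqN: "card ?N = card {y. E a y} - 2"
  proof -
    have "b \<in> {y. E a y}" "d \<in> {y. E a y}" using C(3,6) sym by auto
    moreover have "b \<noteq> d" using C(2) by auto
    ultimately show ?thesis using fin[of a] by (simp add: card_Diff_subset)
  qed
  have "card (f ` ?N) = card ?N" by (rule card_image[OF inj])
  moreover have "card (f ` ?N) \<le> card {T \<in> {H \<in> theta222_subgraphs E. v \<in> \<Union>H}. C \<subseteq> T}"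
    using fth finT by (intro card_mono) auto
  ultimately show ?thesis using eqN by simp
qed

lemma vertex_ineq:
  assumes sym: "\<And>x y. E x y \<Longrightarrow> E y x" and irr: "\<And>x. \<not> E x x"
    and fin: "\<And>x. finite {y. E x y}"
    and char: "\<And>C. C \<in> cycle_subgraphs E 4 \<Longrightarrow> \<exists>a b c d. C = {{a,b},{b,c},{c,d},{d,a}} \<and> distinct [a,b,c,d]
        \<and> E a b \<and> E b c \<and> E c d \<and> E d a \<and> {y. E a y} = {y. E c y} \<and> card {y. E a y} = D"
  shows "(D - 2) * copies_at (cycle_subgraphs E 4) v \<le> 3 * copies_at (theta222_subgraphs E) v"
  unfolding copies_at_def
proof (rule dc[where R = "\<lambda>C T. C \<subseteq> T"])
  show "finite {H \<in> cycle_subgraphs E 4. v \<in> \<Union>H}" by (rule c4set_fin[where E=E, OF sym fin])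
  show "finite {H \<in> theta222_subgraphs E. v \<in> \<Union>H}" by (rule thset_fin[where E=E, OF sym fin])
  fix C assume "C \<in> {H \<in> cycle_subgraphs E 4. v \<in> \<Union>H}"
  then have C: "C \<in> cycle_subgraphs E 4" "v \<in> \<Union>C" by auto
  obtain a b c d where h: "C = {{a,b},{b,c},{c,d},{d,a}}" "distinct [a,b,c,d]"
        "E a b" "E b c" "E c d" "E d a" "{y. E a y} = {y. E c y}" "card {y. E a y} = D"
    using char[OF C(1)] by blast
  show "D - 2 \<le> card {T \<in> {H \<in> theta222_subgraphs E. v \<in> \<Union>H}. C \<subseteq> T}"
    using extend_count[where E=E, OF sym irr fin h(1-7) C(2)] h(8) by simp
next
  fix T assume "T \<in> {H \<in> theta222_subgraphs E. v \<in> \<Union>H}"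
  then have "finite {C \<in> cycle_subgraphs E 4. C \<subseteq> T} \<and> card {C \<in> cycle_subgraphs E 4. C \<subseteq> T} \<le> 3"
    using theta_c4_card by blast
  moreover have "{C \<in> {H \<in> cycle_subgraphs E 4. v \<in> \<Union>H}. C \<subseteq> T} \<subseteq> {C \<in> cycle_subgraphs E 4. C \<subseteq> T}" by auto
  ultimately show "card {C \<in> {H \<in> cycle_subgraphs E 4. v \<in> \<Union>H}. C \<subseteq> T} \<le> 3"
    using card_mono[of "{C \<in> cycle_subgraphs E 4. C \<subseteq> T}" "{C \<in> {H \<in> cycle_subgraphs E 4. v \<in> \<Union>H}. C \<subseteq> T}"]
    by linarith
qed


lemma EE_fin: "0 < m \<Longrightarrow> finite {y. EE m x y}"
proof (cases "x \<in> VV m")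
  case True
  assume m: "0 < m"
  then show ?thesis using card_nbr[OF lift_VV[OF True, THEN conjunct1] m] lift_VV[OF True] by simp
next
  case False
  then have "{y. EE m x y} = {}" using EE_VV by blast
  then show ?thesis by simp
qed

lemma EE_irr: "\<not> EE m x x"
  using simple[of m] unfolding simple_graph_def by blast

lemma lift_props: assumes "EE m x y" shows "emb m (lift m x) = x" "validV m (lift m x)"
  using lift_VV EE_VV[OF assms] by auto

lemma c6_none: "cycle_subgraphs (EE m) 6 = {}"
proof (rule ccontr)
  assume "cycle_subgraphs (EE m) 6 \<noteq> {}"
  then obtain H where "H \<in> cycle_subgraphs (EE m) 6" by blast
  then obtain x :: "nat \<Rightarrow> real^3" where x: "inj_on x {..<6}" "EE m (x 0) (x 1)" "EE m (x 1) (x 2)"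
    "EE m (x 2) (x 3)" "EE m (x 3) (x 4)" "EE m (x 4) (x 5)" "EE m (x 5) (x 0)"
    using c6_explicit by blast
  define u where "u i = lift m (x i)" for i
  have a: "adjA m (u 0) (u 1)" "adjA m (u 1) (u 2)" "adjA m (u 2) (u 3)" "adjA m (u 3) (u 4)"
    "adjA m (u 4) (u 5)" "adjA m (u 5) (u 0)" unfolding u_def using x EE_lift by blast+
  have e: "emb m (u 0) = x 0" "emb m (u 1) = x 1" "emb m (u 2) = x 2" "emb m (u 3) = x 3"
    "emb m (u 4) = x 4" "emb m (u 5) = x 5" unfolding u_def using x lift_props by blast+
  have ij: "\<And>i j. i < 6 \<Longrightarrow> j < 6 \<Longrightarrow> x i = x j \<Longrightarrow> i = j" using x(1) by (simp add: inj_on_def)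
  have xd: "distinct [x 0, x 1, x 2, x 3, x 4, x 5]"
    using ij[of 0 1] ij[of 0 2] ij[of 0 3] ij[of 0 4] ij[of 0 5] ij[of 1 2] ij[of 1 3] ij[of 1 4] ij[of 1 5]
      ij[of 2 3] ij[of 2 4] ij[of 2 5] ij[of 3 4] ij[of 3 5] ij[of 4 5] by auto
  have "distinct (map (emb m) [u 0, u 1, u 2, u 3, u 4, u 5])" using xd e by (simp only: list.map)
  then have ud: "distinct [u 0, u 1, u 2, u 3, u 4, u 5]" by (rule distinct_map[THEN iffD1, THEN conjunct1])
  show False
  proof (cases "u 0")
    case (XV z p b)
    then show False using c6_free[of m z p b "u 1" "u 2" "u 3" "u 4" "u 5"] a ud by simp
  next
    case (YV y i w)
    then obtain z p b where u1: "u 1 = XV z p b" using adjY[of m y i w "u 1"] a(1) by auto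
    then show False using c6_free[of m z p b "u 2" "u 3" "u 4" "u 5" "u 0"] a ud by auto
  qed
qed


lemma c4_char:
  assumes m: "0 < m" and C: "C \<in> cycle_subgraphs (EE m) 4"
  shows "\<exists>a b c d. C = {{a,b},{b,c},{c,d},{d,a}} \<and> distinct [a,b,c,d] \<and> EE m a b \<and> EE m b c
     \<and> EE m c d \<and> EE m d a \<and> {y. EE m a y} = {y. EE m c y} \<and> card {y. EE m a y} = 2*m"
proof -
  obtain x :: "nat \<Rightarrow> real^3" where x: "inj_on x {..<4}" "EE m (x 0) (x 1)" "EE m (x 1) (x 2)"
    "EE m (x 2) (x 3)" "EE m (x 3) (x 0)" "C = {{x 0, x 1}, {x 1, x 2}, {x 2, x 3}, {x 3, x 0}}"
    using C unfolding c4_explicit by blast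
  define u where "u i = lift m (x i)" for i
  have a: "adjA m (u 0) (u 1)" "adjA m (u 1) (u 2)" "adjA m (u 2) (u 3)" "adjA m (u 3) (u 0)"
    unfolding u_def using x EE_lift by blast+
  have e: "emb m (u 0) = x 0" "emb m (u 1) = x 1" "emb m (u 2) = x 2" "emb m (u 3) = x 3"
    unfolding u_def using x lift_props by blast+
  have vv: "validV m (u 0)" "validV m (u 1)" "validV m (u 2)" "validV m (u 3)"
    unfolding u_def using x lift_props by blast+
  have ij: "\<And>i j. i < 4 \<Longrightarrow> j < 4 \<Longrightarrow> x i = x j \<Longrightarrow> i = j" using x(1) by (simp add: inj_on_def)
  have xd: "distinct [x 0, x 1, x 2, x 3]"
    using ij[of 0 1] ij[of 0 2] ij[of 0 3] ij[of 1 2] ij[of 1 3] ij[of 2 3] by auto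
  have ud: "u 0 \<noteq> u 2" "u 1 \<noteq> u 3" using xd e by auto
  show ?thesis
  proof (cases "u 0")
    case (XV z p b)
    then obtain b' where u2: "u 2 = XV z p b'" using c4_twins[of m z p b "u 1" "u 2" "u 3"] a ud by auto
    have "{y. EE m (x 0) y} = {y. EE m (x 2) y}"
      using twin_nbr[of m z p b b'] vv(1) XV u2 e by simp
    moreover have "card {y. EE m (x 0) y} = 2*m" using card_nbr[OF vv(1) m] e by simp
    ultimately show ?thesis using x xd by blast
  next
    case (YV y i w)
    then obtain z p b where u1: "u 1 = XV z p b" using adjY[of m y i w "u 1"] a(1) by auto
    then obtain b' where u3: "u 3 = XV z p b'" using c4_twins[of m z p b "u 2" "u 3" "u 0"] a ud by auto
    have "{y. EE m (x 1) y} = {y. EE m (x 3) y}"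
      using twin_nbr[of m z p b b'] vv(2) u1 u3 e by simp
    moreover have "card {y. EE m (x 1) y} = 2*m" using card_nbr[OF vv(2) m] e by simp
    moreover have "C = {{x 1, x 2}, {x 2, x 3}, {x 3, x 0}, {x 0, x 1}}" using x(6) by (simp add: insert_commute)
    moreover have "distinct [x 1, x 2, x 3, x 0]" using xd by auto
    ultimately show ?thesis using x by blast
  qed
qed

lemma EE_sym_all: "EE m x y \<Longrightarrow> EE m y x" by (rule EE_sym)

lemma vineq: assumes m: "0 < m"
  shows "(2*m - 2) * copies_at (cycle_subgraphs (EE m) 4) v \<le> 3 * copies_at (theta222_subgraphs (EE m)) v"
proof (rule vertex_ineq[where E="EE m" and D="2*m"])
  show "\<And>x y. EE m x y \<Longrightarrow> EE m y x" by (rule EE_sym)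
  show "\<And>x. \<not> EE m x x" by (rule EE_irr)
  show "\<And>x. finite {y. EE m x y}" by (rule EE_fin[OF m])
  show "\<And>C. C \<in> cycle_subgraphs (EE m) 4 \<Longrightarrow> \<exists>a b c d. C = {{a,b},{b,c},{c,d},{d,a}} \<and> distinct [a,b,c,d]
        \<and> EE m a b \<and> EE m b c \<and> EE m c d \<and> EE m d a \<and> {y. EE m a y} = {y. EE m c y} \<and> card {y. EE m a y} = 2*m"
    by (rule c4_char[OF m])
qed


lemma wit_adj: assumes "2 < m" "3 \<le> k" "k < 2*m"
  shows "adjA m (XV 0 (zeros m) b) (YV 0 k (zeros m))"
  using assms zeros_valid[of m] by (simp add: xy_def validL_def zeros_def onl_def delta_def integer_vector_def)

lemma wit_valid: assumes "2 < m" "3 \<le> k" "k < 2*m"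
  shows "validV m (XV 0 (zeros m) b)" "validV m (YV 0 k (zeros m))"
  using adj_valid[OF wit_adj[OF assms, of b]] by auto

definition O0 :: "nat \<Rightarrow> real^3" where "O0 m = emb m (XV 0 (zeros m) False)"

lemma witness: assumes m: "2 < m"
  shows "\<exists>H. H \<in> cycle_subgraphs (EE m) 4 \<and> O0 m \<in> \<Union>H"
proof -
  let ?a = "XV 0 (zeros m) False" and ?b = "YV 0 3 (zeros m)" and ?c = "XV 0 (zeros m) True" and ?d = "YV 0 4 (zeros m)"
  have k3: "3 \<le> (3::nat)" "3 < 2*m" and k4: "3 \<le> (4::nat)" "4 < 2*m" using m by auto
  have vs: "validV m ?a" "validV m ?b" "validV m ?c" "validV m ?d"
    using wit_valid[OF m k3] wit_valid[OF m k4] by auto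
  have ad: "adjA m ?a ?b" "adjA m ?b ?c" "adjA m ?c ?d" "adjA m ?d ?a"
    using wit_adj[OF m k3] wit_adj[OF m k4] adj_sym by blast+
  define x where "x i = (if i = 0 then emb m ?a else if i = 1 then emb m ?b else if i = 2 then emb m ?c else emb m ?d)" for i :: nat
  have x: "x 0 = emb m ?a" "x 1 = emb m ?b" "x 2 = emb m ?c" "x 3 = emb m ?d" unfolding x_def by auto
  have E: "EE m (x 0) (x 1)" "EE m (x 1) (x 2)" "EE m (x 2) (x 3)" "EE m (x 3) (x 0)"
    unfolding x using ad vs EE_emb by blast+
  have ne: "emb m ?a \<noteq> emb m ?b" "emb m ?a \<noteq> emb m ?c" "emb m ?a \<noteq> emb m ?d"
    "emb m ?b \<noteq> emb m ?c" "emb m ?b \<noteq> emb m ?d" "emb m ?c \<noteq> emb m ?d"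
    using emb_inj[OF vs(1) vs(2)] emb_inj[OF vs(1) vs(3)] emb_inj[OF vs(1) vs(4)]
      emb_inj[OF vs(2) vs(3)] emb_inj[OF vs(2) vs(4)] emb_inj[OF vs(3) vs(4)] by auto
  have "inj_on x {..<4}"
  proof (rule inj_onI)
    fix i j assume "i \<in> {..<(4::nat)}" "j \<in> {..<4}" "x i = x j"
    then have "i = 0 \<or> i = 1 \<or> i = 2 \<or> i = 3" "j = 0 \<or> j = 1 \<or> j = 2 \<or> j = 3" by auto
    moreover have "x 0 \<noteq> x 1" "x 0 \<noteq> x 2" "x 0 \<noteq> x 3" "x 1 \<noteq> x 2" "x 1 \<noteq> x 3" "x 2 \<noteq> x 3"
      using ne unfolding x by auto
    ultimately show "i = j" using \<open>x i = x j\<close> by auto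
  qed
  then have "{{x 0, x 1}, {x 1, x 2}, {x 2, x 3}, {x 3, x 0}} \<in> cycle_subgraphs (EE m) 4"
    unfolding c4_explicit using E by blast
  moreover have "O0 m \<in> \<Union>{{x 0, x 1}, {x 1, x 2}, {x 2, x 3}, {x 3, x 0}}" unfolding O0_def x by simp
  ultimately show ?thesis by blast
qed

lemma O0_reps: assumes "0 < m" shows "O0 m \<in> reps (VV m)"
proof -
  have v: "validV m (XV 0 (zeros m) False)" using zeros_valid[OF assms] by (simp add: integer_vector_def)
  have "cube_of (O0 m) = 0" unfolding O0_def cube_emb_eq[OF v] by (simp add: vec_eq_iff)
  moreover have "O0 m \<in> VV m" unfolding VV_def O0_def by (rule imageI) (use v in simp)
  ultimately show ?thesis unfolding reps_def by auto
qed

lemma c4_pos: assumes "2 < m" shows "0 < copies_at (cycle_subgraphs (EE m) 4) (O0 m)"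
proof -
  have m: "0 < m" using assms by simp
  have "finite {H \<in> cycle_subgraphs (EE m) 4. O0 m \<in> \<Union>H}"
    by (rule c4set_fin[where E="EE m"]) (auto intro: EE_sym EE_fin[OF m])
  moreover have "{H \<in> cycle_subgraphs (EE m) 4. O0 m \<in> \<Union>H} \<noteq> {}" using witness[OF assms] by blast
  ultimately show ?thesis unfolding copies_at_def by (simp add: card_gt_0_iff)
qed


lemma ratio_bound: assumes m: "2 < m"
  shows "4 * (2 * real m - 2) / 15 \<le> theta222_bar (VV m) (EE m) / C4_bar (VV m) (EE m)"
proof -
  let ?R = "reps (VV m)"
  define c where "c v = real (copies_at (cycle_subgraphs (EE m) 4) v)" for v
  define t where "t v = real (copies_at (theta222_subgraphs (EE m)) v)" for v
  define K where "K = 2 * real m - 2"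
  have m0: "0 < m" using m by simp
  have finR: "finite ?R" unfolding reps_def using finite_cube by blast
  have O: "O0 m \<in> ?R" using O0_reps[OF m0] .
  have nR: "0 < real (card ?R)" using finR O by (auto simp: card_gt_0_iff)
  have pv: "K * c v \<le> 3 * t v" for v
  proof -
    have "(2*m - 2) * copies_at (cycle_subgraphs (EE m) 4) v \<le> 3 * copies_at (theta222_subgraphs (EE m)) v"
      using vineq[OF m0] .
    then have "real ((2*m - 2) * copies_at (cycle_subgraphs (EE m) 4) v) \<le> real (3 * copies_at (theta222_subgraphs (EE m)) v)"
      by (rule of_nat_mono)
    moreover have "real (2*m - 2) = K" unfolding K_def using m by (simp add: of_nat_diff)
    ultimately show ?thesis unfolding c_def t_def by simp
  qed
  have c0: "0 \<le> c v" for v unfolding c_def by simp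
  have cO: "0 < c (O0 m)" unfolding c_def using c4_pos[OF m] by simp
  define Sc where "Sc = (\<Sum>v\<in>?R. c v / 4)"
  define St where "St = (\<Sum>v\<in>?R. t v / 5)"
  have Sc_pos: "0 < Sc"
  proof -
    have "c (O0 m) / 4 \<le> Sc" unfolding Sc_def
      by (rule member_le_sum[OF O]) (use c0 finR in auto)
    then show ?thesis using cO by simp
  qed
  have "(\<Sum>v\<in>?R. (K * 4 / 15) * (c v / 4)) \<le> St" unfolding St_def
  proof (rule sum_mono)
    fix v show "(K * 4 / 15) * (c v / 4) \<le> t v / 5" using pv[of v] by simp
  qed
  then have St: "(K * 4 / 15) * Sc \<le> St" unfolding Sc_def by (simp add: sum_distrib_left)
  have eq: "theta222_bar (VV m) (EE m) / C4_bar (VV m) (EE m) = St / Sc"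
    unfolding theta222_bar_def C4_bar_def St_def Sc_def c_def t_def using nR by simp
  show ?thesis unfolding eq using St Sc_pos unfolding K_def by (simp add: pos_le_divide_eq)
qed

theorem mainTheorem1:
  fixes \<kappa> :: real
  shows "\<exists>(V :: (real^3) set) (E :: real^3 \<Rightarrow> real^3 \<Rightarrow> bool).
           cubic_lattice V E \<and> regular_graph V E \<and> bipartite_graph V E \<and>
           cycle_subgraphs E 6 = {} \<and> cycle_subgraphs E 4 \<noteq> {} \<and>
           theta222_bar V E / C4_bar V E > \<kappa>"
proof -
  define m where "m = 3 + nat \<lceil>2 * \<bar>\<kappa>\<bar>\<rceil>"
  have m: "2 < m" "1 < m" "0 < m" unfolding m_def by auto
  have rm: "3 + 2 * \<bar>\<kappa>\<bar> \<le> real m" unfolding m_def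
    by (simp add: of_nat_nat)
  have cub: "cubic_lattice (VV m) (EE m)"
    unfolding cubic_lattice_def
  proof (intro conjI allI impI ballI)
    show "simple_graph (VV m) (EE m)" by (rule simple)
    show "connected_graph (VV m) (EE m)" by (rule connected[OF m(2)])
    show "infinite (VV m)" by (rule infinite_VV[OF m(3)])
    show "closed_segment a b \<inter> closed_segment c d \<subseteq> {a, b} \<inter> {c, d}"
      if "EE m a b \<and> EE m c d \<and> {a, b} \<noteq> {c, d}" for a b c d
      using segments that by blast
    show "x \<in> VV m \<longleftrightarrow> x + t \<in> VV m" if "integer_vector t" for t x using VV_shift that by blast
    show "EE m x y \<longleftrightarrow> EE m (x + t) (y + t)" if "integer_vector t" for t x y using EE_shift that by blast
    show "v $ i \<notin> \<int>" if "v \<in> VV m" for v i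
      using that nonint unfolding VV_def by blast
    show "finite {v \<in> VV m. cube_of v = z}" for z by (rule finite_cube)
    show "cube_of x = cube_of y \<or> (\<exists>i. \<bar>cube_of x $ i - cube_of y $ i\<bar> = 1 \<and>
             (\<forall>j. j \<noteq> i \<longrightarrow> cube_of x $ j = cube_of y $ j))" if "EE m x y" for x y
      using edge_cube that by blast
  qed
  have reg: "regular_graph (VV m) (EE m)"
    unfolding regular_graph_def
  proof (intro exI ballI)
    fix v assume "v \<in> VV m"
    then show "finite {w. EE m v w} \<and> card {w. EE m v w} = 2*m"
      using card_nbr[OF lift_VV[OF \<open>v \<in> VV m\<close>, THEN conjunct1] m(3)] lift_VV[OF \<open>v \<in> VV m\<close>] by simp
  qed
  have c4ne: "cycle_subgraphs (EE m) 4 \<noteq> {}" using witness[OF m(1)] by blast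
  have k1: "15 * \<kappa> < 8 * real m - 8" using rm abs_ge_self[of \<kappa>] abs_ge_zero[of \<kappa>] by linarith
  have "\<kappa> < 4 * (2 * real m - 2) / 15" using k1 by (simp add: field_simps)
  then have "\<kappa> < theta222_bar (VV m) (EE m) / C4_bar (VV m) (EE m)" using ratio_bound[OF m(1)] by linarith
  then show ?thesis using cub reg bipartite c6_none c4ne by blast
qed


end
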